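(* Let $x\sim\mathcal N(0,I_d)$ and $\gamma(z)\defeq\frac{e^z(1-e^z)}{(1+e^z)^3}$. Fix $\theta\in\mathbb{R}^d$ with $c<\|\theta\|_2<C$ for constants $0<c<C$, and let $t=\|\theta\|_2$. Then $\mathbb{E}\big[\gamma(\langle x,\theta\rangle)\,x^{\otimes3}\big]=a(t)\,\theta^{\otimes3}+b(t)\,\mathrm{sym}(I\otimes\theta),$ where, with $Z\sim\mathcal N(0,1)$, $b(t)=\frac1t\mathbb{E}[Z\gamma(tZ)]$ and $a(t)=\frac1{t^3}\big(\mathbb{E}[Z^3\gamma(tZ)]-3\mathbb{E}[Z\gamma(tZ)]\big)$. Moreover, there are constants $c_1,c_2>0$ depending only on $c,C$ such that for every $v\in\mathbb{R}^d$, $-c_2\|v\|_2^2\le \mathbb{E}\big[\gamma(\langle x,\theta\rangle)\langle x,v\rangle^2\langle x,\theta\rangle\big]\le -c_1\|v\|_2^2.$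
   Context: $\gamma$ is the third derivative of $z\mapsto\log(1+e^{-z})$ (equivalently the derivative of $\sigma(z)(1-\sigma(z))$ with $\sigma$ the sigmoid). $\mathrm{sym}(I\otimes\theta)$ denotes the 3-tensor with entries $\delta_{jk}\theta_i+\delta_{ik}\theta_j+\delta_{ij}\theta_k$. *)

theory Defs
  imports "HOL-Probability.Probability"
begin

definition gam :: "real \<Rightarrow> real" where
  "gam z = exp z * (1 - exp z) / (1 + exp z) ^ 3"

definition std_normal_M :: "real measure" where
  "std_normal_M = density lborel std_normal_density"

text \<open>Standard Gaussian N(0, I_d) on R^d, with R^d represented as functions
  on the index set {..<d} (product measure of d independent N(0,1) coordinates).\<close>
definition gauss_vec :: "nat \<Rightarrow> (nat \<Rightarrow> real) measure" where
  "gauss_vec d = PiM {..<d} (\<lambda>_. std_normal_M)"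

definition ip :: "nat \<Rightarrow> (nat \<Rightarrow> real) \<Rightarrow> (nat \<Rightarrow> real) \<Rightarrow> real" where
  "ip d x y = (\<Sum>i<d. x i * y i)"

definition vnorm :: "nat \<Rightarrow> (nat \<Rightarrow> real) \<Rightarrow> real" where
  "vnorm d x = sqrt (ip d x x)"

definition coef_b :: "real \<Rightarrow> real" where
  "coef_b t = (1 / t) * (\<integral>z. z * gam (t * z) \<partial>std_normal_M)"

definition coef_a :: "real \<Rightarrow> real" where
  "coef_a t = (1 / t ^ 3) * ((\<integral>z. z ^ 3 * gam (t * z) \<partial>std_normal_M)
                            - 3 * (\<integral>z. z * gam (t * z) \<partial>std_normal_M))"

definition kd :: "nat \<Rightarrow> nat \<Rightarrow> real" where
  "kd i j = (if i = j then 1 else 0)"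

end

theory Submission
  imports Defs "HOL-Real_Asymp.Real_Asymp"
begin

lemma N_def': "std_normal_M = density lborel (\<lambda>x. ennreal (std_normal_density x))"
  by (simp add: std_normal_M_def)

lemma prob_N: "prob_space std_normal_M"
  unfolding N_def' by (rule prob_space_normal_density) simp

lemma integral_N: "f \<in> borel_measurable borel \<Longrightarrow>
   (\<integral>x. f x \<partial>std_normal_M) = (\<integral>x. std_normal_density x * f x \<partial>lborel)"
  unfolding N_def' by (subst integral_density) auto

lemma integrable_N: "f \<in> borel_measurable borel \<Longrightarrow>
   integrable std_normal_M f \<longleftrightarrow> integrable lborel (\<lambda>x. std_normal_density x * f x)"
  unfolding N_def' by (subst integrable_density) auto

lemma lim_poly_gauss: "((\<lambda>x::real. K * (1 + x\<^sup>2) * ((1 / sqrt (2 * pi)) * exp (- x\<^sup>2 / 2))) \<longlongrightarrow> 0) at_top"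
      "((\<lambda>x::real. K * (1 + x\<^sup>2) * ((1 / sqrt (2 * pi)) * exp (- x\<^sup>2 / 2))) \<longlongrightarrow> 0) at_bot"
  by real_asymp+

lemma integrable_poly_gauss: "integrable lborel (\<lambda>x. std_normal_density x * (a + b*\<bar>x\<bar> + c * x\<^sup>2 + e * \<bar>x\<bar>^3))"
proof -
  have "integrable lborel (\<lambda>x. a * (std_normal_density x * \<bar>x\<bar>^0) + b * (std_normal_density x * \<bar>x\<bar>^1)
     + c * (std_normal_density x * \<bar>x\<bar>^2) + e * (std_normal_density x * \<bar>x\<bar>^3))"
    using integrable_std_normal_moment_abs[of 0] integrable_std_normal_moment_abs[of 1]
      integrable_std_normal_moment_abs[of 2] integrable_std_normal_moment_abs[of 3]
    by (intro Bochner_Integration.integrable_add Bochner_Integration.integrable_mult_right) auto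
  then show ?thesis by (simp add: algebra_simps power2_eq_square)
qed

lemma stein1:
  fixes h h' :: "real \<Rightarrow> real" and K :: real
  assumes der: "\<And>y. (h has_real_derivative h' y) (at y)" and cont: "continuous_on UNIV h'"
    and bh: "\<And>y. \<bar>h y\<bar> \<le> K * (1 + y\<^sup>2)" and bh': "\<And>y. \<bar>h' y\<bar> \<le> K * (1 + y\<^sup>2)"
  shows "(\<integral>y. y * h y \<partial>std_normal_M) = (\<integral>y. h' y \<partial>std_normal_M)"
proof -
  let ?p = std_normal_density
  have ch: "continuous_on UNIV h"
    using der by (meson DERIV_continuous continuous_at_imp_continuous_on)
  have mh[measurable]: "h \<in> borel_measurable borel" using ch by (rule borel_measurable_continuous_onI)
  have mh'[measurable]: "h' \<in> borel_measurable borel" using cont by (rule borel_measurable_continuous_onI)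
  have dp: "(?p has_real_derivative (- y * ?p y)) (at y)" for y
    unfolding std_normal_density_def
    by (auto intro!: derivative_eq_intros simp: field_simps)
  have dF: "((\<lambda>y. h y * ?p y) has_vector_derivative (h' y * ?p y - y * h y * ?p y)) (at y)" for y
    using DERIV_mult[OF der dp] by (simp add: has_real_derivative_iff_has_vector_derivative[symmetric] algebra_simps)
  have K0: "0 \<le> K" using bh[of 0] by simp
  have i1: "integrable lborel (\<lambda>y. ?p y * h' y)"
  proof (rule Bochner_Integration.integrable_bound[OF integrable_poly_gauss[of K 0 K 0]])
    show "AE x in lborel. norm (?p x * h' x) \<le> norm (?p x * (K + 0 * \<bar>x\<bar> + K * x\<^sup>2 + 0 * \<bar>x\<bar>^3))"
    proof (intro AE_I2)
      fix x
      have "\<bar>h' x\<bar> * ?p x \<le> K * (1 + x\<^sup>2) * ?p x" using bh'[of x] by (intro mult_right_mono) auto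
      then show "norm (?p x * h' x) \<le> norm (?p x * (K + 0 * \<bar>x\<bar> + K * x\<^sup>2 + 0 * \<bar>x\<bar>^3))"
        using K0 by (simp add: abs_mult algebra_simps)
    qed
  qed auto
  have i2: "integrable lborel (\<lambda>y. ?p y * (y * h y))"
  proof (rule Bochner_Integration.integrable_bound[OF integrable_poly_gauss[of 0 K 0 K]])
    have "\<bar>y\<bar> * \<bar>h y\<bar> \<le> \<bar>y\<bar> * (K * (1 + y\<^sup>2))" for y
      using bh[of y] by (intro mult_left_mono) auto
    then show "AE x in lborel. norm (?p x * (x * h x)) \<le> norm (?p x * (0 + K * \<bar>x\<bar> + 0 * x\<^sup>2 + K * \<bar>x\<bar>^3))"
    proof (intro AE_I2)
      fix x
      assume a: "\<And>y. \<bar>y\<bar> * \<bar>h y\<bar> \<le> \<bar>y\<bar> * (K * (1 + y\<^sup>2))"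
      have "\<bar>x\<bar> * \<bar>h x\<bar> * ?p x \<le> \<bar>x\<bar> * (K * (1 + x\<^sup>2)) * ?p x" using a[of x] by (intro mult_right_mono) auto
      moreover have "\<bar>x\<bar> * (K * (1 + x\<^sup>2)) = K * \<bar>x\<bar> + K * \<bar>x\<bar>^3"
        by (simp add: algebra_simps power2_eq_square power3_eq_cube)
      moreover have "norm (?p x * (x * h x)) = \<bar>x\<bar> * \<bar>h x\<bar> * ?p x" by (simp add: abs_mult)
      moreover have "0 \<le> K * \<bar>x\<bar> + K * \<bar>x\<bar>^3" using K0 by simp
      moreover have "norm (?p x * (0 + K * \<bar>x\<bar> + 0 * x\<^sup>2 + K * \<bar>x\<bar>^3)) = ?p x * (K * \<bar>x\<bar> + K * \<bar>x\<bar>^3)"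
        using calculation(4) by (simp add: abs_mult)
      ultimately show "norm (?p x * (x * h x)) \<le> norm (?p x * (0 + K * \<bar>x\<bar> + 0 * x\<^sup>2 + K * \<bar>x\<bar>^3))"
        by (simp add: mult.commute)
    qed
  qed auto
  have i3: "set_integrable lborel (einterval (-\<infinity>) \<infinity>) (\<lambda>y. h' y * ?p y - y * h y * ?p y)"
    unfolding einterval_eq_UNIV set_integrable_def using Bochner_Integration.integrable_diff[OF i1 i2]
    by (simp add: algebra_simps)
  have lim: "((\<lambda>y. h y * ?p y) \<longlongrightarrow> 0) F" if "F = at_top \<or> F = at_bot" for F
  proof (rule Lim_null_comparison)
    show "\<forall>\<^sub>F x in F. norm (h x * ?p x) \<le> K * (1 + x\<^sup>2) * ((1 / sqrt (2 * pi)) * exp (- x\<^sup>2 / 2))"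
    proof (intro always_eventually allI)
      fix x
      have "\<bar>h x\<bar> * ((1 / sqrt (2 * pi)) * exp (- x\<^sup>2 / 2)) \<le> K * (1 + x\<^sup>2) * ((1 / sqrt (2 * pi)) * exp (- x\<^sup>2 / 2))"
        using bh[of x] by (intro mult_right_mono) auto
      then show "norm (h x * ?p x) \<le> K * (1 + x\<^sup>2) * ((1 / sqrt (2 * pi)) * exp (- x\<^sup>2 / 2))"
        by (simp add: abs_mult std_normal_density_def)
    qed
    show "((\<lambda>x::real. K * (1 + x\<^sup>2) * ((1 / sqrt (2 * pi)) * exp (- x\<^sup>2 / 2))) \<longlongrightarrow> 0) F"
      using that lim_poly_gauss by auto
  qed
  have "(LBINT y=-\<infinity>..\<infinity>. h' y * ?p y - y * h y * ?p y) = 0 - 0"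
  proof (rule interval_integral_FTC_integrable[OF _ _ _ i3])
    show "(((\<lambda>y. h y * ?p y) \<circ> real_of_ereal) \<longlongrightarrow> 0) (at_right (-\<infinity>))"
      unfolding at_right_MInf filterlim_filtermap using lim[of at_bot] by (simp add: o_def)
    show "(((\<lambda>y. h y * ?p y) \<circ> real_of_ereal) \<longlongrightarrow> 0) (at_left \<infinity>)"
      unfolding at_left_PInf filterlim_filtermap using lim[of at_top] by (simp add: o_def)
    show "isCont (\<lambda>y. h' y * ?p y - y * h y * ?p y) x" for x
      using ch cont by (auto intro!: continuous_intros simp: continuous_on_eq_continuous_at normal_density_def)
  qed (use dF in auto)
  then have "(\<integral>y. ?p y * h' y - ?p y * (y * h y) \<partial>lborel) = 0"
    by (simp add: interval_lebesgue_integral_def einterval_eq_UNIV set_lebesgue_integral_def algebra_simps)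
  then have "(\<integral>y. ?p y * h' y \<partial>lborel) = (\<integral>y. ?p y * (y * h y) \<partial>lborel)"
    using Bochner_Integration.integral_diff[OF i1 i2] by simp
  then show ?thesis by (simp add: integral_N)
qed

lemma sets_N[measurable_cong, simp]: "sets std_normal_M = sets borel"
  by (simp add: N_def')

lemma space_N[simp]: "space std_normal_M = UNIV"
  by (simp add: N_def')

lemma distr_N_id: "distributed std_normal_M lborel (\<lambda>x. x) std_normal_density"
  unfolding distributed_def by (auto simp: N_def' distr_id2)

lemma integral_scale_N:
  assumes "s \<noteq> 0" and [measurable]: "f \<in> borel_measurable borel"
  shows "(\<integral>z. f (s * z) \<partial>std_normal_M) = (\<integral>x. normal_density 0 \<bar>s\<bar> x * f x \<partial>lborel)"
proof -
  interpret prob_space std_normal_M by (rule prob_N)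
  have "distributed std_normal_M lborel (\<lambda>x. 0 + s * x) (normal_density (0 + s * 0) (\<bar>s\<bar> * 1))"
    by (rule normal_density_affine[OF distr_N_id]) (use assms in auto)
  then have d: "distributed std_normal_M lborel (\<lambda>x. s * x) (normal_density 0 \<bar>s\<bar>)" by simp
  show ?thesis by (subst distributed_integral[OF d]) auto
qed

lemma distr_NN_fst: "distr (std_normal_M \<Otimes>\<^sub>M std_normal_M) std_normal_M fst = std_normal_M"
proof -
  interpret prob_space std_normal_M by (rule prob_N)
  show ?thesis by (rule distr_pair_fst)
qed

lemma distr_NN_snd: "distr (std_normal_M \<Otimes>\<^sub>M std_normal_M) std_normal_M snd = std_normal_M"
proof (intro measure_eqI)
  interpret N: prob_space std_normal_M by (rule prob_N)
  interpret pair_sigma_finite std_normal_M std_normal_M ..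
  fix A assume A: "A \<in> sets (distr (std_normal_M \<Otimes>\<^sub>M std_normal_M) std_normal_M snd)"
  from A have "emeasure (distr (std_normal_M \<Otimes>\<^sub>M std_normal_M) std_normal_M snd) A
     = emeasure (std_normal_M \<Otimes>\<^sub>M std_normal_M) (space std_normal_M \<times> A)"
    by (auto simp add: emeasure_distr space_pair_measure dest: sets.sets_into_space intro!: arg_cong2[where f=emeasure])
  moreover have "emeasure (std_normal_M \<Otimes>\<^sub>M std_normal_M) (space std_normal_M \<times> A) = emeasure std_normal_M A"
  proof -
    have "emeasure (std_normal_M \<Otimes>\<^sub>M std_normal_M) (UNIV \<times> A) = emeasure std_normal_M UNIV * emeasure std_normal_M A"
      using sigma_finite_measure.emeasure_pair_measure_Times[OF N.sigma_finite_measure_axioms, of UNIV std_normal_M A] A by simp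
    then show ?thesis using N.emeasure_space_1 A by simp
  qed
  ultimately show "emeasure (distr (std_normal_M \<Otimes>\<^sub>M std_normal_M) std_normal_M snd) A = emeasure std_normal_M A" by simp
qed simp

lemma integral_2d:
  fixes f :: "real \<Rightarrow> real" and a b B :: real
  assumes [measurable]: "f \<in> borel_measurable borel" and bf: "\<And>u. \<bar>f u\<bar> \<le> B"
  shows "(\<integral>z. (\<integral>y. f (a * z + b * y) \<partial>std_normal_M) \<partial>std_normal_M)
       = (\<integral>z. f (sqrt (a\<^sup>2 + b\<^sup>2) * z) \<partial>std_normal_M)"
proof -
  interpret N: prob_space std_normal_M by (rule prob_N)
  interpret P: pair_prob_space std_normal_M std_normal_M ..
  let ?M = "std_normal_M \<Otimes>\<^sub>M std_normal_M"
  have intM: "integrable ?M (\<lambda>p. f (a * fst p + b * snd p))"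
    by (rule P.integrable_const_bound[where B=B]) (use bf in auto)
  have fub: "(\<integral>z. (\<integral>y. f (a * z + b * y) \<partial>std_normal_M) \<partial>std_normal_M) = (\<integral>p. f (a * fst p + b * snd p) \<partial>?M)"
    using P.integral_fst'[OF intM] by simp
  show ?thesis
  proof (cases "a = 0 \<or> b = 0")
    case True
    then show ?thesis
    proof
      assume a0: "a = 0"
      have "(\<integral>z. (\<integral>y. f (a * z + b * y) \<partial>std_normal_M) \<partial>std_normal_M) = (\<integral>y. f (b * y) \<partial>std_normal_M)"
        using a0 N.prob_space by simp
      also have "\<dots> = (\<integral>z. f (sqrt (a\<^sup>2 + b\<^sup>2) * z) \<partial>std_normal_M)"
      proof (cases "b = 0")
        case False
        then show ?thesis using a0 by (simp add: integral_scale_N)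
      qed (use a0 in simp)
      finally show ?thesis .
    next
      assume b0: "b = 0"
      have "(\<integral>z. (\<integral>y. f (a * z + b * y) \<partial>std_normal_M) \<partial>std_normal_M) = (\<integral>z. f (a * z) \<partial>std_normal_M)"
        using b0 N.prob_space by simp
      also have "\<dots> = (\<integral>z. f (sqrt (a\<^sup>2 + b\<^sup>2) * z) \<partial>std_normal_M)"
      proof (cases "a = 0")
        case False
        then show ?thesis using b0 by (simp add: integral_scale_N)
      qed (use b0 in simp)
      finally show ?thesis .
    qed
  next
    case False
    then have a0: "a \<noteq> 0" and b0: "b \<noteq> 0" by auto
    have dfst: "distributed ?M lborel fst std_normal_density"
    proof -
      have "distr ?M lborel fst = distr ?M std_normal_M fst" by (rule distr_cong) auto
      then show ?thesis unfolding distributed_def using distr_NN_fst by (auto simp: N_def')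
    qed
    have dsnd: "distributed ?M lborel snd std_normal_density"
    proof -
      have "distr ?M lborel snd = distr ?M std_normal_M snd" by (rule distr_cong) auto
      then show ?thesis unfolding distributed_def using distr_NN_snd by (auto simp: N_def')
    qed
    have "distributed ?M lborel (\<lambda>x. 0 + a * fst x) (normal_density (0 + a * 0) (\<bar>a\<bar> * 1))"
      by (rule P.normal_density_affine[OF dfst]) (use a0 in auto)
    then have dX: "distributed ?M lborel (\<lambda>x. a * fst x) (normal_density 0 \<bar>a\<bar>)" by simp
    have "distributed ?M lborel (\<lambda>x. 0 + b * snd x) (normal_density (0 + b * 0) (\<bar>b\<bar> * 1))"
      by (rule P.normal_density_affine[OF dsnd]) (use b0 in auto)
    then have dY: "distributed ?M lborel (\<lambda>x. b * snd x) (normal_density 0 \<bar>b\<bar>)" by simp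
    have ind0: "P.indep_var std_normal_M fst std_normal_M snd"
      unfolding P.indep_var_distribution_eq
      by (simp add: distr_NN_fst distr_NN_snd distr_id2[symmetric] del: distr_id2)
    have "P.indep_var borel ((\<lambda>x. a * x) \<circ> fst) borel ((\<lambda>x. b * x) \<circ> snd)"
      by (rule P.indep_var_compose[OF ind0]) auto
    then have ind: "P.indep_var borel (\<lambda>x. a * fst x) borel (\<lambda>x. b * snd x)" by (simp add: o_def)
    have "distributed ?M lborel (\<lambda>x. a * fst x + b * snd x) (normal_density (0 + 0) (sqrt (\<bar>a\<bar>\<^sup>2 + \<bar>b\<bar>\<^sup>2)))"
      by (rule P.add_indep_normal[OF ind _ _ dX dY]) (use a0 b0 in auto)
    then have dS: "distributed ?M lborel (\<lambda>x. a * fst x + b * snd x) (normal_density 0 (sqrt (a\<^sup>2 + b\<^sup>2)))"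
      by simp
    have "(\<integral>p. f (a * fst p + b * snd p) \<partial>?M) = (\<integral>x. normal_density 0 (sqrt (a\<^sup>2 + b\<^sup>2)) x * f x \<partial>lborel)"
      by (subst distributed_integral[OF dS]) auto
    also have "\<dots> = (\<integral>z. f (sqrt (a\<^sup>2 + b\<^sup>2) * z) \<partial>std_normal_M)"
    proof -
      have "sqrt (a\<^sup>2 + b\<^sup>2) \<noteq> 0" using a0 by simp
      then show ?thesis by (subst integral_scale_N) auto
    qed
    finally show ?thesis using fub by simp
  qed
qed

lemma PN: "product_sigma_finite (\<lambda>_::nat. std_normal_M)"
  unfolding product_sigma_finite_def using prob_N prob_space_imp_sigma_finite by blast

lemma sfN: "sigma_finite_measure std_normal_M"
  using prob_N prob_space_imp_sigma_finite by blast

lemma prob_G: "prob_space (gauss_vec d)"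
  unfolding gauss_vec_def by (rule prob_space_PiM) (use prob_N in auto)

lemma ip_Suc_upd: "ip (Suc d) (x(d:=y)) \<theta> = ip d x \<theta> + y * \<theta> d"
proof -
  have "(\<Sum>i<d. (x(d:=y)) i * \<theta> i) = (\<Sum>i<d. x i * \<theta> i)"
    by (rule sum.cong) auto
  then show ?thesis unfolding ip_def by simp
qed

lemma ip_nonneg: "0 \<le> ip d \<theta> \<theta>"
  unfolding ip_def by (simp add: sum_nonneg)

lemma vnorm_Suc: "vnorm (Suc d) \<theta> = sqrt ((vnorm d \<theta>)\<^sup>2 + (\<theta> d)\<^sup>2)"
  unfolding vnorm_def using ip_nonneg[of d \<theta>] by (simp add: ip_def power2_eq_square)

lemma meas_ip[measurable]: "(\<lambda>x. ip d x \<theta>) \<in> borel_measurable (gauss_vec d)"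
  unfolding ip_def gauss_vec_def by measurable

lemma abs_integral_le:
  fixes f :: "'a \<Rightarrow> real"
  assumes "prob_space M" "f \<in> borel_measurable M" "\<And>x. \<bar>f x\<bar> \<le> B"
  shows "\<bar>integral\<^sup>L M f\<bar> \<le> B"
proof -
  interpret prob_space M by fact
  have i: "integrable M f"
    by (rule integrable_const_bound[where B=B]) (use assms in auto)
  have "\<bar>integral\<^sup>L M f\<bar> \<le> (\<integral>x. \<bar>f x\<bar> \<partial>M)" by (rule integral_abs_bound)
  also have "\<dots> \<le> B"
    by (rule integral_le_const) (use i assms in auto)
  finally show ?thesis .
qed

lemma law:
  fixes f :: "real \<Rightarrow> real" and B :: real
  assumes "f \<in> borel_measurable borel" and "\<And>u. \<bar>f u\<bar> \<le> B"
  shows "(\<integral>x. f (ip d x \<theta>) \<partial>gauss_vec d) = (\<integral>z. f (vnorm d \<theta> * z) \<partial>std_normal_M)"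
  using assms
proof (induction d arbitrary: f)
  case 0
  interpret N: prob_space std_normal_M by (rule prob_N)
  interpret G: prob_space "gauss_vec 0" by (rule prob_G)
  show ?case using G.prob_space N.prob_space by (simp add: ip_def vnorm_def)
next
  case (Suc d)
  note fm[measurable] = Suc.prems(1)
  interpret N: prob_space std_normal_M by (rule prob_N)
  interpret G: prob_space "gauss_vec d" by (rule prob_G)
  interpret G': prob_space "gauss_vec (Suc d)" by (rule prob_G)
  interpret PN: product_sigma_finite "\<lambda>_::nat. std_normal_M" by (rule PN)
  define g where "g u = (\<integral>y. f (u + y * \<theta> d) \<partial>std_normal_M)" for u
  have gm[measurable]: "g \<in> borel_measurable borel"
    unfolding g_def
    by (rule sigma_finite_measure.borel_measurable_lebesgue_integral[OF sfN]) measurable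
  have gb: "\<bar>g u\<bar> \<le> B" for u
    unfolding g_def by (rule abs_integral_le[OF prob_N]) (use Suc.prems in auto)
  have int: "integrable (gauss_vec (Suc d)) (\<lambda>x. f (ip (Suc d) x \<theta>))"
    by (rule G'.integrable_const_bound[where B=B]) (use Suc.prems in auto)
  have "(\<integral>x. f (ip (Suc d) x \<theta>) \<partial>gauss_vec (Suc d))
      = (\<integral>x. (\<integral>y. f (ip (Suc d) (x(d:=y)) \<theta>) \<partial>std_normal_M) \<partial>gauss_vec d)"
    using PN.product_integral_insert[of "{..<d}" d "\<lambda>x. f (ip (Suc d) x \<theta>)"] int
    by (simp add: gauss_vec_def lessThan_Suc)
  also have "\<dots> = (\<integral>x. g (ip d x \<theta>) \<partial>gauss_vec d)"
    by (simp add: ip_Suc_upd g_def)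
  also have "\<dots> = (\<integral>z. g (vnorm d \<theta> * z) \<partial>std_normal_M)"
    by (rule Suc.IH[OF gm gb])
  also have "\<dots> = (\<integral>z. (\<integral>y. f (vnorm d \<theta> * z + \<theta> d * y) \<partial>std_normal_M) \<partial>std_normal_M)"
    by (simp add: g_def mult.commute)
  also have "\<dots> = (\<integral>z. f (sqrt ((vnorm d \<theta>)\<^sup>2 + (\<theta> d)\<^sup>2) * z) \<partial>std_normal_M)"
    by (rule integral_2d[OF fm Suc.prems(2)])
  finally show ?case by (simp add: vnorm_Suc)
qed


lemma aux1: fixes e::real assumes "0<e" shows "e*(1-e)/(1+e)^3 = e/(1+e) - 3*(e/(1+e))^2 + 2*(e/(1+e))^3"
proof -
  have u: "1+e \<noteq> 0" using assms by simp
  have "e/(1+e) - 3*(e/(1+e))^2 + 2*(e/(1+e))^3 = (e*(1+e)^2 - 3*e^2*(1+e) + 2*e^3)/(1+e)^3"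
    using u by (simp add: power_divide diff_divide_distrib add_divide_distrib power2_eq_square power3_eq_cube)
  also have "\<dots> = e*(1-e)/(1+e)^3" by (simp add: algebra_simps power2_eq_square power3_eq_cube)
  finally show ?thesis by simp
qed
lemma aux2: fixes e::real assumes "0<e" shows "(e * (1 + e) - e * e) / ((1 + e) * (1 + e)) = e/(1+e) - (e/(1+e))^2"
proof -
  have u: "1+e \<noteq> 0" using assms by simp
  have "e/(1+e) - (e/(1+e))^2 = (e*(1+e) - e^2)/(1+e)^2"
    using u by (simp add: power_divide diff_divide_distrib power2_eq_square)
  then show ?thesis by (simp add: power2_eq_square)
qed

definition sg :: "real \<Rightarrow> real" where "sg z = exp z / (1 + exp z)"
definition Q1 :: "real \<Rightarrow> real" where "Q1 p = (1 - 6*p + 6*p^2) * (p - p^2)"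
definition Q2 :: "real \<Rightarrow> real" where "Q2 p = (1 - 14*p + 36*p^2 - 24*p^3) * (p - p^2)"
definition Q3 :: "real \<Rightarrow> real" where "Q3 p = (1 - 30*p + 150*p^2 - 240*p^3 + 120*p^4) * (p - p^2)"
definition g1 :: "real \<Rightarrow> real" where "g1 z = Q1 (sg z)"
definition g2 :: "real \<Rightarrow> real" where "g2 z = Q2 (sg z)"
definition g3 :: "real \<Rightarrow> real" where "g3 z = Q3 (sg z)"

lemma sg_bounds: "0 < sg z" "sg z < 1"
  unfolding sg_def by (auto simp: divide_simps add_pos_pos)

lemma sg_deriv: "(sg has_real_derivative (sg z - (sg z)^2)) (at z)"
proof -
  have "(sg has_real_derivative ((exp z * (1 + exp z) - exp z * exp z) / ((1 + exp z) * (1 + exp z)))) (at z)"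
    unfolding sg_def[abs_def]
    by (rule DERIV_divide) (auto intro!: derivative_eq_intros simp: add_pos_pos, metis add_pos_pos exp_gt_zero less_irrefl zero_less_one)
  then show ?thesis using aux2[of "exp z"] by (simp add: sg_def)
qed

lemma gam_sg: "gam z = sg z - 3 * (sg z)^2 + 2 * (sg z)^3"
  unfolding gam_def sg_def using aux1[of "exp z"] by simp

lemma chain_sg:
  assumes "\<And>p. (Q has_real_derivative Q' p) (at p)"
  shows "((\<lambda>z. Q (sg z)) has_real_derivative (Q' (sg z) * (sg z - (sg z)^2))) (at z)"
  using DERIV_chain2[OF assms sg_deriv] .

lemma gam_deriv: "(gam has_real_derivative g1 z) (at z)"
proof -
  have "((\<lambda>z. (\<lambda>p. p - 3 * p^2 + 2 * p^3) (sg z)) has_real_derivative ((\<lambda>p. 1 - 6*p + 6*p^2) (sg z) * (sg z - (sg z)^2))) (at z)"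
    by (rule chain_sg) (auto intro!: derivative_eq_intros simp: algebra_simps power2_eq_square power3_eq_cube)
  moreover have "gam = (\<lambda>z. sg z - 3 * (sg z)^2 + 2 * (sg z)^3)" by (rule ext) (rule gam_sg)
  ultimately show ?thesis unfolding g1_def Q1_def by simp
qed

lemma g1_deriv: "(g1 has_real_derivative g2 z) (at z)"
proof -
  have "((\<lambda>z. Q1 (sg z)) has_real_derivative ((\<lambda>p. 1 - 14*p + 36*p^2 - 24*p^3) (sg z) * (sg z - (sg z)^2))) (at z)"
    by (rule chain_sg) (auto simp: Q1_def intro!: derivative_eq_intros simp: algebra_simps power2_eq_square power3_eq_cube)
  then show ?thesis unfolding g1_def[abs_def] g2_def Q2_def by simp
qed

lemma g2_deriv: "(g2 has_real_derivative g3 z) (at z)"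
proof -
  have "((\<lambda>z. Q2 (sg z)) has_real_derivative ((\<lambda>p. 1 - 30*p + 150*p^2 - 240*p^3 + 120*p^4) (sg z) * (sg z - (sg z)^2))) (at z)"
    by (rule chain_sg) (auto simp: Q2_def intro!: derivative_eq_intros simp: algebra_simps power2_eq_square power3_eq_cube power4_eq_xxxx)
  then show ?thesis unfolding g2_def[abs_def] g3_def Q3_def by simp
qed

lemma cont_sg: "continuous_on UNIV sg"
  unfolding sg_def by (auto intro!: continuous_intros simp: add_pos_pos) (metis add_pos_pos exp_gt_zero less_irrefl zero_less_one)

lemma cont_g: "continuous_on UNIV gam" "continuous_on UNIV g1" "continuous_on UNIV g2" "continuous_on UNIV g3"
  unfolding g1_def[abs_def] g2_def[abs_def] g3_def[abs_def] Q1_def Q2_def Q3_def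
  using cont_sg gam_sg by (auto intro!: continuous_intros simp: gam_sg[abs_def])

lemma poly_bound:
  fixes p :: real
  assumes "0 \<le> p" "p \<le> 1"
  shows "\<bar>p - 3 * p^2 + 2 * p^3\<bar> \<le> 1000" "\<bar>Q1 p\<bar> \<le> 1000" "\<bar>Q2 p\<bar> \<le> 1000" "\<bar>Q3 p\<bar> \<le> 1000"
proof -
  have p2: "0 \<le> p^2" "p^2 \<le> 1" using assms by (auto simp: power_le_one)
  have p3: "0 \<le> p^3" "p^3 \<le> 1" using assms by (auto simp: power_le_one)
  have p4: "0 \<le> p^4" "p^4 \<le> 1" using assms by (auto simp: power_le_one)
  have p5: "0 \<le> p^5" "p^5 \<le> 1" using assms by (auto simp: power_le_one)
  have p6: "0 \<le> p^6" "p^6 \<le> 1" using assms by (auto simp: power_le_one)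
  have e1: "Q1 p = p - 7*p^2 + 12*p^3 - 6*p^4" unfolding Q1_def by (simp add: algebra_simps power2_eq_square power3_eq_cube power4_eq_xxxx)
  have e2: "Q2 p = p - 15*p^2 + 50*p^3 - 60*p^4 + 24*p^5" unfolding Q2_def
    by (simp add: algebra_simps power2_eq_square power3_eq_cube power4_eq_xxxx numeral_eq_Suc)
  have e3: "Q3 p = p - 31*p^2 + 180*p^3 - 390*p^4 + 360*p^5 - 120*p^6" unfolding Q3_def
    by (simp add: algebra_simps power2_eq_square power3_eq_cube power4_eq_xxxx numeral_eq_Suc)
  show "\<bar>p - 3 * p^2 + 2 * p^3\<bar> \<le> 1000" using assms p2 p3 by linarith
  show "\<bar>Q1 p\<bar> \<le> 1000" unfolding e1 using assms p2 p3 p4 by linarith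
  show "\<bar>Q2 p\<bar> \<le> 1000" unfolding e2 using assms p2 p3 p4 p5 by linarith
  show "\<bar>Q3 p\<bar> \<le> 1000" unfolding e3 using assms p2 p3 p4 p5 p6 by linarith
qed

lemma g_bound: "\<bar>gam z\<bar> \<le> 1000" "\<bar>g1 z\<bar> \<le> 1000" "\<bar>g2 z\<bar> \<le> 1000" "\<bar>g3 z\<bar> \<le> 1000"
  using poly_bound[of "sg z"] sg_bounds[of z] by (auto simp: gam_sg g1_def g2_def g3_def)
lemma intN:
  fixes f :: "real \<Rightarrow> real"
  assumes [measurable]: "f \<in> borel_measurable borel" and b: "\<And>z. \<bar>f z\<bar> \<le> K * (1 + \<bar>z\<bar>^3)"
  shows "integrable std_normal_M f"
proof -
  have "integrable lborel (\<lambda>x. std_normal_density x * f x)"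
  proof (rule Bochner_Integration.integrable_bound[OF integrable_poly_gauss[of K 0 0 K]])
    show "AE x in lborel. norm (std_normal_density x * f x) \<le> norm (std_normal_density x * (K + 0 * \<bar>x\<bar> + 0 * x\<^sup>2 + K * \<bar>x\<bar>^3))"
    proof (intro AE_I2)
      fix x
      have K0: "0 \<le> K" using b[of 0] by simp
      have "\<bar>f x\<bar> * std_normal_density x \<le> K * (1 + \<bar>x\<bar>^3) * std_normal_density x"
        using b[of x] by (intro mult_right_mono) auto
      moreover have "0 \<le> K + K * \<bar>x\<bar>^3" using K0 by simp
      ultimately show "norm (std_normal_density x * f x) \<le> norm (std_normal_density x * (K + 0 * \<bar>x\<bar> + 0 * x\<^sup>2 + K * \<bar>x\<bar>^3))"
        by (simp add: abs_mult algebra_simps)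
    qed
  qed auto
  then show ?thesis using integrable_N by simp
qed

lemma chain_lin:
  assumes "\<And>u. (g has_real_derivative g' u) (at u)"
  shows "((\<lambda>z. g (t * z)) has_real_derivative (t * g' (t * z))) (at z)"
proof -
  have "((\<lambda>z. t * z) has_real_derivative t) (at z)" by (auto intro!: derivative_eq_intros)
  from DERIV_chain2[OF assms this] show ?thesis by (simp add: mult.commute)
qed

lemma meas_g[measurable]: "gam \<in> borel_measurable borel" "g1 \<in> borel_measurable borel"
  "g2 \<in> borel_measurable borel" "g3 \<in> borel_measurable borel"
  using cont_g by (auto intro: borel_measurable_continuous_onI)

lemma absz_le: "\<bar>z::real\<bar> \<le> 1 + z\<^sup>2"
proof -
  have "0 \<le> (\<bar>z\<bar> - 1)^2" by simp
  then have "2 * \<bar>z\<bar> \<le> 1 + \<bar>z\<bar> * \<bar>z\<bar>" by (simp add: power2_eq_square algebra_simps)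
  moreover have "\<bar>z\<bar> * \<bar>z\<bar> = z\<^sup>2" by (simp add: power2_eq_square abs_mult[symmetric])
  moreover have "0 \<le> z\<^sup>2" by simp
  ultimately show ?thesis by linarith
qed

lemma absz_le3: "\<bar>z::real\<bar>^2 \<le> 1 + \<bar>z\<bar>^3" "\<bar>z::real\<bar> \<le> 1 + \<bar>z\<bar>^3"
proof -
  show "\<bar>z\<bar>^2 \<le> 1 + \<bar>z\<bar>^3"
  proof (cases "\<bar>z\<bar> \<le> 1")
    case True then have "\<bar>z\<bar>^2 \<le> 1" by (intro power_le_one) auto
    then show ?thesis by simp (smt (verit) zero_le_power abs_ge_zero)
  next
    case False then have "\<bar>z\<bar>^2 \<le> \<bar>z\<bar>^3" by (intro power_increasing) auto
    then show ?thesis by simp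
  qed
  show "\<bar>z\<bar> \<le> 1 + \<bar>z\<bar>^3"
  proof (cases "\<bar>z\<bar> \<le> 1")
    case True
    have "0 \<le> \<bar>z\<bar>^3" by simp
    then show ?thesis using True by linarith
  next
    case False then have "\<bar>z\<bar>^1 \<le> \<bar>z\<bar>^3" by (intro power_increasing) auto
    then show ?thesis by simp
  qed
qed

lemma E1_id: "(\<integral>z. z * gam (t * z) \<partial>std_normal_M) = t * (\<integral>z. g1 (t * z) \<partial>std_normal_M)"
proof -
  have "(\<integral>z. z * gam (t * z) \<partial>std_normal_M) = (\<integral>z. t * g1 (t * z) \<partial>std_normal_M)"
  proof (rule stein1[where K = "1000 * (1 + \<bar>t\<bar>)"])
    show "((\<lambda>z. gam (t * z)) has_real_derivative t * g1 (t * y)) (at y)" for y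
      by (rule chain_lin[OF gam_deriv])
    show "continuous_on UNIV (\<lambda>z. t * g1 (t * z))"
      using cont_g(2) by (auto intro!: continuous_intros intro: continuous_on_compose2)
    show "\<bar>gam (t * y)\<bar> \<le> 1000 * (1 + \<bar>t\<bar>) * (1 + y\<^sup>2)" for y
    proof -
      have "1000 \<le> 1000 * (1 + \<bar>t\<bar>) * (1 + y\<^sup>2)" by (simp add: algebra_simps)
      then show ?thesis using g_bound(1)[of "t*y"] by linarith
    qed
    show "\<bar>t * g1 (t * y)\<bar> \<le> 1000 * (1 + \<bar>t\<bar>) * (1 + y\<^sup>2)" for y
    proof -
      have "\<bar>t * g1 (t * y)\<bar> \<le> \<bar>t\<bar> * 1000" unfolding abs_mult using g_bound(2)[of "t*y"] by (intro mult_left_mono) auto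
      also have "\<dots> \<le> 1000 * (1 + \<bar>t\<bar>) * (1 + y\<^sup>2)" by (simp add: algebra_simps)
      finally show ?thesis .
    qed
  qed
  then show ?thesis by simp
qed
lemma pk: "k \<le> 2 \<Longrightarrow> \<bar>y::real\<bar>^k \<le> 1 + y\<^sup>2"
proof -
  assume "k \<le> 2"
  then consider "k = 0" | "k = 1" | "k = 2" by linarith
  then show ?thesis
  proof cases
    case 1 then show ?thesis by simp
  next
    case 2 then show ?thesis using absz_le[of y] by simp
  next
    case 3 then show ?thesis by simp
  qed
qed

lemma pk3: "k \<le> 3 \<Longrightarrow> \<bar>y::real\<bar>^k \<le> 1 + \<bar>y\<bar>^3"
proof -
  assume "k \<le> 3"
  then consider "k = 0" | "k = 1" | "k = 2" | "k = 3" by linarith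
  then show ?thesis
  proof cases
    case 1 then show ?thesis by simp
  next
    case 2 then show ?thesis using absz_le3(2)[of y] by simp
  next
    case 3 then show ?thesis using absz_le3(1)[of y] by simp
  next
    case 4 then show ?thesis by simp
  qed
qed

lemma bterm: fixes c y g :: real assumes "\<bar>g\<bar> \<le> 1000" "k \<le> 2"
  shows "\<bar>c * y^k * g\<bar> \<le> 1000 * \<bar>c\<bar> * (1 + y\<^sup>2)"
proof -
  have "\<bar>c * y^k * g\<bar> = \<bar>c\<bar> * (\<bar>y\<bar>^k * \<bar>g\<bar>)" by (simp add: abs_mult power_abs)
  also have "\<dots> \<le> \<bar>c\<bar> * ((1 + y\<^sup>2) * 1000)"
    by (intro mult_left_mono mult_mono pk assms) auto
  finally show ?thesis by (simp add: algebra_simps)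
qed

lemma bterm3: fixes c y g :: real assumes "\<bar>g\<bar> \<le> 1000" "k \<le> 3"
  shows "\<bar>c * y^k * g\<bar> \<le> 1000 * \<bar>c\<bar> * (1 + \<bar>y\<bar>^3)"
proof -
  have "\<bar>c * y^k * g\<bar> = \<bar>c\<bar> * (\<bar>y\<bar>^k * \<bar>g\<bar>)" by (simp add: abs_mult power_abs)
  also have "\<dots> \<le> \<bar>c\<bar> * ((1 + \<bar>y\<bar>^3) * 1000)"
    by (intro mult_left_mono mult_mono pk3 assms) auto
  finally show ?thesis by (simp add: algebra_simps)
qed

lemma intN_term: assumes "\<And>u. \<bar>g u\<bar> \<le> 1000" "k \<le> 3" "g \<in> borel_measurable borel"
  shows "integrable std_normal_M (\<lambda>y. c * y^k * g (t * y))"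
  by (rule intN[where K="1000 * \<bar>c\<bar>"]) (use assms in \<open>auto intro!: bterm3\<close>)

lemma E3_id: "(\<integral>z. z^3 * gam (t * z) \<partial>std_normal_M)
   = 3 * (\<integral>z. z * gam (t * z) \<partial>std_normal_M) + t^3 * (\<integral>z. g3 (t * z) \<partial>std_normal_M)"
proof -
  have cg: "continuous_on UNIV (\<lambda>z. g (t * z))" if "continuous_on UNIV g" for g
    using that by (auto intro!: continuous_intros intro: continuous_on_compose2)
  note cgs = cg[OF cont_g(1)] cg[OF cont_g(2)] cg[OF cont_g(3)] cg[OF cont_g(4)]
  have S1: "(\<integral>z. z * (z^2 * gam (t * z)) \<partial>std_normal_M)
      = (\<integral>z. 2 * z^1 * gam (t * z) + t * z^2 * g1 (t * z) \<partial>std_normal_M)"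
  proof (rule stein1[where K = "1000 * (2 + \<bar>t\<bar>)"])
    show "((\<lambda>z. z^2 * gam (t * z)) has_real_derivative 2 * y^1 * gam (t * y) + t * y^2 * g1 (t * y)) (at y)" for y
      using DERIV_mult[OF DERIV_pow[of 2 y] chain_lin[OF gam_deriv, of t y]] by (simp add: algebra_simps)
    show "continuous_on UNIV (\<lambda>z. 2 * z^1 * gam (t * z) + t * z^2 * g1 (t * z))"
      using cgs by (auto intro!: continuous_intros)
    show "\<bar>y^2 * gam (t * y)\<bar> \<le> 1000 * (2 + \<bar>t\<bar>) * (1 + y\<^sup>2)" for y
      using bterm[OF g_bound(1), of 2 1 y "t*y"] by (simp add: algebra_simps) (smt (verit) zero_le_power2 mult_nonneg_nonneg abs_ge_zero)
    show "\<bar>2 * y^1 * gam (t * y) + t * y^2 * g1 (t * y)\<bar> \<le> 1000 * (2 + \<bar>t\<bar>) * (1 + y\<^sup>2)" for y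
      using bterm[OF g_bound(1), of 1 2 y "t*y"] bterm[OF g_bound(2), of 2 t y "t*y"]
      by (simp add: algebra_simps)
  qed
  have S2: "(\<integral>z. z * (t * z^1 * g1 (t * z)) \<partial>std_normal_M)
      = (\<integral>z. t * z^0 * g1 (t * z) + t^2 * z^1 * g2 (t * z) \<partial>std_normal_M)"
  proof (rule stein1[where K = "1000 * (\<bar>t\<bar> + t^2)"])
    show "((\<lambda>z. t * z^1 * g1 (t * z)) has_real_derivative t * y^0 * g1 (t * y) + t^2 * y^1 * g2 (t * y)) (at y)" for y
      using DERIV_cmult[OF DERIV_mult[OF DERIV_ident chain_lin[OF g1_deriv, of t y]], of t]
      by (simp add: algebra_simps power2_eq_square)
    show "continuous_on UNIV (\<lambda>z. t * z^0 * g1 (t * z) + t^2 * z^1 * g2 (t * z))"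
      using cgs by (auto intro!: continuous_intros)
    show "\<bar>t * y^1 * g1 (t * y)\<bar> \<le> 1000 * (\<bar>t\<bar> + t^2) * (1 + y\<^sup>2)" for y
      using bterm[OF g_bound(2), of 1 t y "t*y"] by (simp add: algebra_simps) (smt (verit) zero_le_power2 mult_nonneg_nonneg abs_ge_zero)
    show "\<bar>t * y^0 * g1 (t * y) + t^2 * y^1 * g2 (t * y)\<bar> \<le> 1000 * (\<bar>t\<bar> + t^2) * (1 + y\<^sup>2)" for y
      using bterm[OF g_bound(2), of 0 t y "t*y"] bterm[OF g_bound(3), of 1 "t^2" y "t*y"]
      by (simp add: algebra_simps)
  qed
  have S3: "(\<integral>z. z * (t^2 * z^0 * g2 (t * z)) \<partial>std_normal_M)
      = (\<integral>z. t^3 * z^0 * g3 (t * z) \<partial>std_normal_M)"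
  proof (rule stein1[where K = "1000 * (t^2 + \<bar>t\<bar>^3)"])
    show "((\<lambda>z. t^2 * z^0 * g2 (t * z)) has_real_derivative t^3 * y^0 * g3 (t * y)) (at y)" for y
      using DERIV_cmult[OF chain_lin[OF g2_deriv, of t y], of "t^2"]
      by (simp add: algebra_simps power2_eq_square power3_eq_cube)
    show "continuous_on UNIV (\<lambda>z. t^3 * z^0 * g3 (t * z))"
      using cgs by (auto intro!: continuous_intros)
    show "\<bar>t^2 * y^0 * g2 (t * y)\<bar> \<le> 1000 * (t^2 + \<bar>t\<bar>^3) * (1 + y\<^sup>2)" for y
      using bterm[OF g_bound(3), of 0 "t^2" y "t*y"] by (simp add: algebra_simps) (smt (verit) zero_le_power2 mult_nonneg_nonneg abs_ge_zero zero_le_power)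
    show "\<bar>t^3 * y^0 * g3 (t * y)\<bar> \<le> 1000 * (t^2 + \<bar>t\<bar>^3) * (1 + y\<^sup>2)" for y
      using bterm[OF g_bound(4), of 0 "t^3" y "t*y"] by (simp add: algebra_simps power_abs) (smt (verit) zero_le_power2 mult_nonneg_nonneg abs_ge_zero zero_le_power)
  qed
  have i1: "integrable std_normal_M (\<lambda>z. 2 * z^1 * gam (t * z))" by (rule intN_term) (use g_bound in auto)
  have i2: "integrable std_normal_M (\<lambda>z. t * z^2 * g1 (t * z))" by (rule intN_term) (use g_bound in auto)
  have i3: "integrable std_normal_M (\<lambda>z. t * z^0 * g1 (t * z))" by (rule intN_term) (use g_bound in auto)
  have i4: "integrable std_normal_M (\<lambda>z. t^2 * z^1 * g2 (t * z))" by (rule intN_term) (use g_bound in auto)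
  have "(\<integral>z. z^3 * gam (t * z) \<partial>std_normal_M) = (\<integral>z. z * (z^2 * gam (t * z)) \<partial>std_normal_M)"
    by (simp add: power3_eq_cube power2_eq_square mult.assoc)
  also have "\<dots> = (\<integral>z. 2 * z^1 * gam (t * z) \<partial>std_normal_M) + (\<integral>z. t * z^2 * g1 (t * z) \<partial>std_normal_M)"
    using S1 Bochner_Integration.integral_add[OF i1 i2] by simp
  also have "(\<integral>z. t * z^2 * g1 (t * z) \<partial>std_normal_M) = (\<integral>z. z * (t * z^1 * g1 (t * z)) \<partial>std_normal_M)"
    by (simp add: power2_eq_square algebra_simps)
  also have "\<dots> = (\<integral>z. t * z^0 * g1 (t * z) \<partial>std_normal_M) + (\<integral>z. t^2 * z^1 * g2 (t * z) \<partial>std_normal_M)"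
    using S2 Bochner_Integration.integral_add[OF i3 i4] by simp
  also have "(\<integral>z. t^2 * z^1 * g2 (t * z) \<partial>std_normal_M) = (\<integral>z. z * (t^2 * z^0 * g2 (t * z)) \<partial>std_normal_M)"
    by (simp add: algebra_simps)
  also have "\<dots> = t^3 * (\<integral>z. g3 (t * z) \<partial>std_normal_M)"
    using S3 by simp
  also have "(\<integral>z. t * z^0 * g1 (t * z) \<partial>std_normal_M) = (\<integral>z. z * gam (t * z) \<partial>std_normal_M)"
    using E1_id[of t] by simp
  also have "(\<integral>z. 2 * z^1 * gam (t * z) \<partial>std_normal_M) = 2 * (\<integral>z. z * gam (t * z) \<partial>std_normal_M)"
    by (simp add: mult.assoc)
  finally show ?thesis by simp
qed
lemma coef_b_eq: "t \<noteq> 0 \<Longrightarrow> coef_b t = (\<integral>z. g1 (t * z) \<partial>std_normal_M)"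
  unfolding coef_b_def E1_id by simp

lemma coef_a_eq: "t \<noteq> 0 \<Longrightarrow> coef_a t = (\<integral>z. g3 (t * z) \<partial>std_normal_M)"
  unfolding coef_a_def E3_id by simp

lemma sets_G[measurable_cong]: "sets (gauss_vec d) = sets (PiM {..<d} (\<lambda>_. borel))"
  unfolding gauss_vec_def by (rule sets_PiM_cong) auto

lemma space_G: "space (gauss_vec d) = PiE {..<d} (\<lambda>_. UNIV)"
  unfolding gauss_vec_def by (simp add: space_PiM)

lemma meas_comp[measurable]: "i < d \<Longrightarrow> (\<lambda>x. x i) \<in> borel_measurable (gauss_vec d)"
  unfolding gauss_vec_def by measurable

lemma steinD:
  fixes F Fd :: "(nat \<Rightarrow> real) \<Rightarrow> real"
  assumes k: "k < d"
    and mF[measurable]: "F \<in> borel_measurable (gauss_vec d)" and mFd[measurable]: "Fd \<in> borel_measurable (gauss_vec d)"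
    and i1: "integrable (gauss_vec d) (\<lambda>x. x k * F x)" and i2: "integrable (gauss_vec d) Fd"
    and der: "\<And>x y. ((\<lambda>y. F (x(k:=y))) has_real_derivative Fd (x(k:=y))) (at y)"
    and cont: "\<And>x. continuous_on UNIV (\<lambda>y. Fd (x(k:=y)))"
    and bnd: "\<And>x. \<exists>K. \<forall>y. \<bar>F (x(k:=y))\<bar> \<le> K * (1 + y\<^sup>2) \<and> \<bar>Fd (x(k:=y))\<bar> \<le> K * (1 + y\<^sup>2)"
  shows "(\<integral>x. x k * F x \<partial>gauss_vec d) = (\<integral>x. Fd x \<partial>gauss_vec d)"
proof -
  interpret PN: product_sigma_finite "\<lambda>_::nat. std_normal_M" by (rule PN)
  define I where "I = {..<d} - {k}"
  have dI: "{..<d} = insert k I" and fI: "finite I" and kI: "k \<notin> I" using k by (auto simp: I_def)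
  have "(\<integral>x. x k * F x \<partial>gauss_vec d) = (\<integral>x. (\<integral>y. (x(k:=y)) k * F (x(k:=y)) \<partial>std_normal_M) \<partial>PiM I (\<lambda>_. std_normal_M))"
    using PN.product_integral_insert[OF fI kI, of "\<lambda>x. x k * F x"] i1 by (simp add: gauss_vec_def dI)
  also have "\<dots> = (\<integral>x. (\<integral>y. Fd (x(k:=y)) \<partial>std_normal_M) \<partial>PiM I (\<lambda>_. std_normal_M))"
  proof (rule Bochner_Integration.integral_cong[OF refl])
    fix x
    obtain K where K: "\<And>y. \<bar>F (x(k:=y))\<bar> \<le> K * (1 + y\<^sup>2) \<and> \<bar>Fd (x(k:=y))\<bar> \<le> K * (1 + y\<^sup>2)"
      using bnd[of x] by blast
    show "(\<integral>y. (x(k:=y)) k * F (x(k:=y)) \<partial>std_normal_M) = (\<integral>y. Fd (x(k:=y)) \<partial>std_normal_M)"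
      using stein1[where h="\<lambda>y. F (x(k:=y))" and h'="\<lambda>y. Fd (x(k:=y))" and K=K] der cont K by simp
  qed
  also have "\<dots> = (\<integral>x. Fd x \<partial>gauss_vec d)"
    using PN.product_integral_insert[OF fI kI, of Fd] i2 by (simp add: gauss_vec_def dI)
  finally show ?thesis .
qed
definition W :: "nat \<Rightarrow> (nat \<Rightarrow> real) \<Rightarrow> real" where
  "W d x = (\<Prod>l<d. (1 + (x l)\<^sup>2)^3)"

lemma intW: "integrable (gauss_vec d) (W d)"
proof -
  interpret PN: product_sigma_finite "\<lambda>_::nat. std_normal_M" by (rule PN)
  have "integrable std_normal_M (\<lambda>z. (1 + z\<^sup>2)^3)"
  proof -
    have e: "(\<lambda>z::real. std_normal_density z * (1 + z\<^sup>2)^3) = (\<lambda>z. std_normal_density z * z^0 + 3 * (std_normal_density z * z^2)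
       + 3 * (std_normal_density z * z^4) + std_normal_density z * z^6)"
      by (rule ext) (simp add: algebra_simps power2_eq_square power3_eq_cube numeral_eq_Suc)
    have "integrable lborel (\<lambda>z::real. std_normal_density z * (1 + z\<^sup>2)^3)"
      unfolding e by (intro Bochner_Integration.integrable_add Bochner_Integration.integrable_mult_right integrable_std_normal_moment)
    then show ?thesis by (subst integrable_N) auto
  qed
  then show ?thesis unfolding W_def gauss_vec_def
    by (intro PN.product_integrable_prod) auto
qed

lemma factor_le_prod:
  fixes f :: "nat \<Rightarrow> real"
  assumes "finite I" "l \<in> I" "\<And>i. i \<in> I \<Longrightarrow> 1 \<le> f i"
  shows "f l \<le> prod f I"
proof -
  have "prod f I = f l * prod f (I - {l})" using assms by (simp add: prod.remove)
  moreover have "1 \<le> prod f (I - {l})" using assms by (intro prod_ge_1) auto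
  moreover have "0 \<le> f l" using assms(3)[OF assms(2)] by simp
  ultimately show ?thesis by (metis mult_left_mono mult.right_neutral)
qed

lemma W_ge: "l < d \<Longrightarrow> (1 + (x l)\<^sup>2)^3 \<le> W d x"
  unfolding W_def by (rule factor_le_prod[where f="\<lambda>l. (1 + (x l)\<^sup>2)^3"]) auto

lemma abc_le: fixes a b c :: real assumes "1 \<le> a" "1 \<le> b" "1 \<le> c" shows "a * b * c \<le> a^3 + b^3 + c^3"
proof -
  define m where "m = max a (max b c)"
  have "a * b * c \<le> m * m * m" unfolding m_def using assms
    by (intro mult_mono) (auto simp: max_def)
  also have "\<dots> \<le> a^3 + b^3 + c^3" unfolding m_def using assms
    by (auto simp: max_def power3_eq_cube)
  finally show ?thesis .
qed

lemma mono_bound: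
  assumes "i < d" "j < d" "k < d"
  shows "(1 + (x i)\<^sup>2) * (1 + (x j)\<^sup>2) * (1 + (x k)\<^sup>2) \<le> 3 * W d x"
  using abc_le[of "1 + (x i)\<^sup>2" "1 + (x j)\<^sup>2" "1 + (x k)\<^sup>2"] W_ge[OF assms(1), of x] W_ge[OF assms(2), of x] W_ge[OF assms(3), of x]
  by simp

lemma u_ge: "1 \<le> 1 + (z::real)\<^sup>2" by simp

lemma mono3: "i < d \<Longrightarrow> j < d \<Longrightarrow> k < d \<Longrightarrow> \<bar>x i * x j * x k\<bar> \<le> 3 * W d x"
proof -
  assume a: "i < d" "j < d" "k < d"
  have "\<bar>x i * x j * x k\<bar> = \<bar>x i\<bar> * \<bar>x j\<bar> * \<bar>x k\<bar>" by (simp add: abs_mult)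
  also have "\<dots> \<le> (1 + (x i)\<^sup>2) * (1 + (x j)\<^sup>2) * (1 + (x k)\<^sup>2)"
    by (intro mult_mono absz_le) auto
  also have "\<dots> \<le> 3 * W d x" by (rule mono_bound[OF a])
  finally show ?thesis .
qed

lemma mono2: "i < d \<Longrightarrow> j < d \<Longrightarrow> \<bar>x i * x j\<bar> \<le> 3 * W d x"
proof -
  assume a: "i < d" "j < d"
  have "\<bar>x i * x j\<bar> = \<bar>x i\<bar> * \<bar>x j\<bar> * 1" by (simp add: abs_mult)
  also have "\<dots> \<le> (1 + (x i)\<^sup>2) * (1 + (x j)\<^sup>2) * (1 + (x i)\<^sup>2)"
    by (intro mult_mono absz_le) auto
  also have "\<dots> \<le> 3 * W d x" by (rule mono_bound[OF a a(1)])
  finally show ?thesis .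
qed

lemma mono1: "i < d \<Longrightarrow> \<bar>x i\<bar> \<le> 3 * W d x"
proof -
  assume a: "i < d"
  have "\<bar>x i\<bar> = \<bar>x i\<bar> * 1 * 1" by simp
  also have "\<dots> \<le> (1 + (x i)\<^sup>2) * (1 + (x i)\<^sup>2) * (1 + (x i)\<^sup>2)"
    by (intro mult_mono absz_le) auto
  also have "\<dots> \<le> 3 * W d x" by (rule mono_bound[OF a a a])
  finally show ?thesis .
qed

lemma W_ge1: "1 \<le> W d x"
  unfolding W_def by (intro prod_ge_1) auto

lemma intG:
  fixes f :: "(nat \<Rightarrow> real) \<Rightarrow> real" and K :: real
  assumes "f \<in> borel_measurable (gauss_vec d)" "\<And>x. \<bar>f x\<bar> \<le> K * W d x"
  shows "integrable (gauss_vec d) f"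
proof (rule Bochner_Integration.integrable_bound)
  show "integrable (gauss_vec d) (\<lambda>x. K * W d x)" by (intro Bochner_Integration.integrable_mult_right intW)
  show "AE x in gauss_vec d. norm (f x) \<le> norm (K * W d x)"
    using assms(2) by (intro AE_I2) (smt (verit) real_norm_def)
qed (use assms in auto)
lemma ip_upd: "k < d \<Longrightarrow> ip d (x(k:=y)) \<theta> = ip d x \<theta> + (y - x k) * \<theta> k"
proof -
  assume k: "k < d"
  have e1: "ip d (x(k:=y)) \<theta> = y * \<theta> k + (\<Sum>i\<in>{..<d} - {k}. (x(k:=y)) i * \<theta> i)"
    unfolding ip_def using k by (subst sum.remove[of _ k]) auto
  have e2: "(\<Sum>i\<in>{..<d} - {k}. (x(k:=y)) i * \<theta> i) = (\<Sum>i\<in>{..<d} - {k}. x i * \<theta> i)"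
    by (rule sum.cong) auto
  have e3: "ip d x \<theta> = x k * \<theta> k + (\<Sum>i\<in>{..<d} - {k}. x i * \<theta> i)"
    unfolding ip_def using k by (subst sum.remove[of _ k]) auto
  show ?thesis using e1 e2 e3 by (simp only: left_diff_distrib)
qed

lemma d_ip: "k < d \<Longrightarrow> ((\<lambda>y. ip d (x(k:=y)) \<theta>) has_real_derivative \<theta> k) (at y)"
  by (simp add: ip_upd) (auto intro!: derivative_eq_intros)

lemma c_ip: "k < d \<Longrightarrow> continuous_on UNIV (\<lambda>y. ip d (x(k:=y)) \<theta>)"
  by (simp add: ip_upd) (auto intro!: continuous_intros)

lemma steinG:
  fixes g g' :: "real \<Rightarrow> real" and q qd :: "(nat \<Rightarrow> real) \<Rightarrow> real" and C :: real
  assumes k: "k < d"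
    and gd: "\<And>u. (g has_real_derivative g' u) (at u)" and cg': "continuous_on UNIV g'"
    and bg: "\<And>u. \<bar>g u\<bar> \<le> 1000" and bg': "\<And>u. \<bar>g' u\<bar> \<le> 1000"
    and mq[measurable]: "q \<in> borel_measurable (gauss_vec d)" and mqd[measurable]: "qd \<in> borel_measurable (gauss_vec d)"
    and dq: "\<And>x y. ((\<lambda>y. q (x(k:=y))) has_real_derivative qd (x(k:=y))) (at y)"
    and cqd: "\<And>x. continuous_on UNIV (\<lambda>y. qd (x(k:=y)))"
    and bq: "\<And>x. \<exists>A. \<forall>y. \<bar>q (x(k:=y))\<bar> \<le> A * (1 + y\<^sup>2) \<and> \<bar>qd (x(k:=y))\<bar> \<le> A * (1 + y\<^sup>2)"
    and w1: "\<And>x. \<bar>x k * q x\<bar> \<le> C * W d x" and w2: "\<And>x. \<bar>q x\<bar> \<le> C * W d x"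
    and w3: "\<And>x. \<bar>qd x\<bar> \<le> C * W d x"
  shows "(\<integral>x. x k * (g (ip d x \<theta>) * q x) \<partial>gauss_vec d)
       = \<theta> k * (\<integral>x. g' (ip d x \<theta>) * q x \<partial>gauss_vec d) + (\<integral>x. g (ip d x \<theta>) * qd x \<partial>gauss_vec d)"
proof -
  have cg: "continuous_on UNIV g" using gd by (meson DERIV_continuous continuous_at_imp_continuous_on)
  have mg[measurable]: "g \<in> borel_measurable borel" using cg by (rule borel_measurable_continuous_onI)
  have mg'[measurable]: "g' \<in> borel_measurable borel" using cg' by (rule borel_measurable_continuous_onI)
  have ia: "integrable (gauss_vec d) (\<lambda>x. g' (ip d x \<theta>) * q x)"
  proof (rule intG[where K = "1000 * C"])
    show "\<bar>g' (ip d x \<theta>) * q x\<bar> \<le> 1000 * C * W d x" for x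
      unfolding abs_mult mult.assoc by (intro mult_mono bg' w2) auto
  qed measurable
  have ib: "integrable (gauss_vec d) (\<lambda>x. g (ip d x \<theta>) * qd x)"
  proof (rule intG[where K = "1000 * C"])
    show "\<bar>g (ip d x \<theta>) * qd x\<bar> \<le> 1000 * C * W d x" for x
      unfolding abs_mult mult.assoc by (intro mult_mono bg w3) auto
  qed measurable
  have "(\<integral>x. x k * (g (ip d x \<theta>) * q x) \<partial>gauss_vec d)
      = (\<integral>x. \<theta> k * (g' (ip d x \<theta>) * q x) + g (ip d x \<theta>) * qd x \<partial>gauss_vec d)"
  proof (rule steinD[OF k])
    show "integrable (gauss_vec d) (\<lambda>x. x k * (g (ip d x \<theta>) * q x))"
    proof (rule intG[where K = "1000 * C"])
      show "\<bar>x k * (g (ip d x \<theta>) * q x)\<bar> \<le> 1000 * C * W d x" for x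
      proof -
        have "\<bar>x k * (g (ip d x \<theta>) * q x)\<bar> = \<bar>g (ip d x \<theta>)\<bar> * \<bar>x k * q x\<bar>" by (simp add: abs_mult)
        also have "\<dots> \<le> 1000 * (C * W d x)" by (intro mult_mono bg w1) auto
        finally show ?thesis by simp
      qed
    qed (use k in measurable)
    show "integrable (gauss_vec d) (\<lambda>x. \<theta> k * (g' (ip d x \<theta>) * q x) + g (ip d x \<theta>) * qd x)"
      using ia ib by auto
    show "((\<lambda>y. g (ip d (x(k:=y)) \<theta>) * q (x(k:=y))) has_real_derivative
         \<theta> k * (g' (ip d (x(k:=y)) \<theta>) * q (x(k:=y))) + g (ip d (x(k:=y)) \<theta>) * qd (x(k:=y))) (at y)" for x y
      using DERIV_mult[OF DERIV_chain2[OF gd d_ip[OF k]] dq[of x y]] by (simp add: algebra_simps)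
    show "continuous_on UNIV (\<lambda>y. \<theta> k * (g' (ip d (x(k:=y)) \<theta>) * q (x(k:=y))) + g (ip d (x(k:=y)) \<theta>) * qd (x(k:=y)))" for x
    proof -
      have cq: "continuous_on UNIV (\<lambda>y. q (x(k:=y)))"
        using dq[of x] by (meson DERIV_continuous continuous_at_imp_continuous_on)
      have c1: "continuous_on UNIV (\<lambda>y. g' (ip d (x(k:=y)) \<theta>))"
        by (rule continuous_on_compose2[OF cg' c_ip[OF k]]) auto
      have c2: "continuous_on UNIV (\<lambda>y. g (ip d (x(k:=y)) \<theta>))"
        by (rule continuous_on_compose2[OF cg c_ip[OF k]]) auto
      show ?thesis using cq c1 c2 cqd[of x] by (intro continuous_intros) auto
    qed
    show "\<exists>K. \<forall>y. \<bar>g (ip d (x(k:=y)) \<theta>) * q (x(k:=y))\<bar> \<le> K * (1 + y\<^sup>2) \<and>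
       \<bar>\<theta> k * (g' (ip d (x(k:=y)) \<theta>) * q (x(k:=y))) + g (ip d (x(k:=y)) \<theta>) * qd (x(k:=y))\<bar> \<le> K * (1 + y\<^sup>2)" for x
    proof -
      obtain A where A: "\<And>y. \<bar>q (x(k:=y))\<bar> \<le> A * (1 + y\<^sup>2) \<and> \<bar>qd (x(k:=y))\<bar> \<le> A * (1 + y\<^sup>2)"
        using bq[of x] by blast
      have A0: "0 \<le> A" using A[of 0] abs_ge_zero[of "q (x(k:=0))"] by (simp del: abs_ge_zero)
      show ?thesis
      proof (intro exI allI conjI)
        fix y
        have p1: "\<bar>g (ip d (x(k:=y)) \<theta>) * q (x(k:=y))\<bar> \<le> 1000 * (A * (1 + y\<^sup>2))"
          unfolding abs_mult using A[of y] by (intro mult_mono bg) auto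
        have p2: "\<bar>g' (ip d (x(k:=y)) \<theta>) * q (x(k:=y))\<bar> \<le> 1000 * (A * (1 + y\<^sup>2))"
          unfolding abs_mult using A[of y] by (intro mult_mono bg') auto
        have p3: "\<bar>g (ip d (x(k:=y)) \<theta>) * qd (x(k:=y))\<bar> \<le> 1000 * (A * (1 + y\<^sup>2))"
          unfolding abs_mult using A[of y] by (intro mult_mono bg) auto
        have p4: "\<bar>\<theta> k * (g' (ip d (x(k:=y)) \<theta>) * q (x(k:=y)))\<bar> \<le> \<bar>\<theta> k\<bar> * (1000 * (A * (1 + y\<^sup>2)))"
          unfolding abs_mult[of "\<theta> k"] using p2 by (intro mult_left_mono) auto
        have nn: "0 \<le> 1000 * (A * (1 + y\<^sup>2))" using A0 by simp
        have nn2: "0 \<le> \<bar>\<theta> k\<bar> * (1000 * (A * (1 + y\<^sup>2)))" using nn by simp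
        have eq: "(1000 * A * (1 + \<bar>\<theta> k\<bar>)) * (1 + y\<^sup>2) = 1000 * (A * (1 + y\<^sup>2)) + \<bar>\<theta> k\<bar> * (1000 * (A * (1 + y\<^sup>2)))"
          by (simp add: algebra_simps)
        show "\<bar>g (ip d (x(k:=y)) \<theta>) * q (x(k:=y))\<bar> \<le> (1000 * A * (1 + \<bar>\<theta> k\<bar>)) * (1 + y\<^sup>2)"
          unfolding eq using p1 nn2 by linarith
        have tri: "\<bar>\<theta> k * (g' (ip d (x(k:=y)) \<theta>) * q (x(k:=y))) + g (ip d (x(k:=y)) \<theta>) * qd (x(k:=y))\<bar>
           \<le> \<bar>\<theta> k * (g' (ip d (x(k:=y)) \<theta>) * q (x(k:=y)))\<bar> + \<bar>g (ip d (x(k:=y)) \<theta>) * qd (x(k:=y))\<bar>"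
          by (rule abs_triangle_ineq)
        show "\<bar>\<theta> k * (g' (ip d (x(k:=y)) \<theta>) * q (x(k:=y))) + g (ip d (x(k:=y)) \<theta>) * qd (x(k:=y))\<bar> \<le> (1000 * A * (1 + \<bar>\<theta> k\<bar>)) * (1 + y\<^sup>2)"
          unfolding eq using tri p3 p4 by linarith
      qed
    qed
  qed (use k in measurable)
  also have "\<dots> = \<theta> k * (\<integral>x. g' (ip d x \<theta>) * q x \<partial>gauss_vec d) + (\<integral>x. g (ip d x \<theta>) * qd x \<partial>gauss_vec d)"
    using ia ib by simp
  finally show ?thesis .
qed
lemma d_comp: fixes x :: "nat \<Rightarrow> real" shows "((\<lambda>y. (x(k:=y)) i) has_real_derivative kd i k) (at y)"
  by (cases "i = k") (auto simp: kd_def intro!: derivative_eq_intros)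

lemma c_comp: fixes x :: "nat \<Rightarrow> real" shows "continuous_on UNIV (\<lambda>y. (x(k:=y)) i)"
  by (cases "i = k") (auto intro!: continuous_intros)

lemma comp_bound: fixes x :: "nat \<Rightarrow> real" shows "\<bar>(x(k:=y)) i\<bar> \<le> \<bar>x i\<bar> + \<bar>y\<bar>"
proof (cases "i = k")
  case True
  then have "(x(k:=y)) i = y" by simp
  then show ?thesis using abs_ge_zero[of "x i"] by linarith
next
  case False
  then have "(x(k:=y)) i = x i" by simp
  then show ?thesis using abs_ge_zero[of y] by linarith
qed

lemma kd_abs: "\<bar>kd i j\<bar> \<le> 1" by (simp add: kd_def)

lemma I3:
  fixes g g' :: "real \<Rightarrow> real"
  assumes i: "i < d"
    and gd: "\<And>u. (g has_real_derivative g' u) (at u)" and cg': "continuous_on UNIV g'"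
    and bg: "\<And>u. \<bar>g u\<bar> \<le> 1000" and bg': "\<And>u. \<bar>g' u\<bar> \<le> 1000"
  shows "(\<integral>x. g (ip d x \<theta>) * x i \<partial>gauss_vec d) = \<theta> i * (\<integral>x. g' (ip d x \<theta>) \<partial>gauss_vec d)"
proof -
  have "(\<integral>x. x i * (g (ip d x \<theta>) * 1) \<partial>gauss_vec d)
       = \<theta> i * (\<integral>x. g' (ip d x \<theta>) * 1 \<partial>gauss_vec d) + (\<integral>x. g (ip d x \<theta>) * 0 \<partial>gauss_vec d)"
  proof (rule steinG[OF i gd cg' bg bg', where C=3])
    show "\<exists>A. \<forall>y. \<bar>1::real\<bar> \<le> A * (1 + y\<^sup>2) \<and> \<bar>0::real\<bar> \<le> A * (1 + y\<^sup>2)" for x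
      by (rule exI[of _ 1]) auto
    show "\<bar>x i * 1\<bar> \<le> 3 * W d x" for x using mono1[OF i] by simp
    show "\<bar>1::real\<bar> \<le> 3 * W d x" for x using W_ge1[of d x] by simp
    show "\<bar>0::real\<bar> \<le> 3 * W d x" for x using W_ge1[of d x] by simp
  qed auto
  then show ?thesis by (simp add: mult.commute)
qed

lemma I2:
  fixes g g' :: "real \<Rightarrow> real"
  assumes i: "i < d" and j: "j < d"
    and gd: "\<And>u. (g has_real_derivative g' u) (at u)" and cg': "continuous_on UNIV g'"
    and bg: "\<And>u. \<bar>g u\<bar> \<le> 1000" and bg': "\<And>u. \<bar>g' u\<bar> \<le> 1000"
  shows "(\<integral>x. g (ip d x \<theta>) * x i * x j \<partial>gauss_vec d)
     = \<theta> j * (\<integral>x. g' (ip d x \<theta>) * x i \<partial>gauss_vec d) + kd i j * (\<integral>x. g (ip d x \<theta>) \<partial>gauss_vec d)"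
proof -
  have "(\<integral>x. x j * (g (ip d x \<theta>) * x i) \<partial>gauss_vec d)
       = \<theta> j * (\<integral>x. g' (ip d x \<theta>) * x i \<partial>gauss_vec d) + (\<integral>x. g (ip d x \<theta>) * kd i j \<partial>gauss_vec d)"
  proof (rule steinG[OF j gd cg' bg bg', where C=3])
    show "\<exists>A. \<forall>y. \<bar>(x(j:=y)) i\<bar> \<le> A * (1 + y\<^sup>2) \<and> \<bar>kd i j\<bar> \<le> A * (1 + y\<^sup>2)" for x
    proof (intro exI[of _ "1 + \<bar>x i\<bar>"] allI conjI)
      fix y
      have "\<bar>(x(j:=y)) i\<bar> \<le> \<bar>x i\<bar> + \<bar>y\<bar>" by (rule comp_bound)
      also have "\<dots> \<le> \<bar>x i\<bar> * (1 + y\<^sup>2) + (1 + y\<^sup>2)"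
      proof -
        have "\<bar>x i\<bar> * 1 \<le> \<bar>x i\<bar> * (1 + y\<^sup>2)" by (intro mult_left_mono) auto
        then show ?thesis using absz_le[of y] by linarith
      qed
      finally show "\<bar>(x(j:=y)) i\<bar> \<le> (1 + \<bar>x i\<bar>) * (1 + y\<^sup>2)" by (simp add: algebra_simps)
      have "\<bar>kd i j\<bar> \<le> 1 * 1" using kd_abs by simp
      also have "\<dots> \<le> (1 + \<bar>x i\<bar>) * (1 + y\<^sup>2)" by (intro mult_mono) auto
      finally show "\<bar>kd i j\<bar> \<le> (1 + \<bar>x i\<bar>) * (1 + y\<^sup>2)" .
    qed
    show "\<bar>x j * x i\<bar> \<le> 3 * W d x" for x using mono2[OF j i] by simp
    show "\<bar>x i\<bar> \<le> 3 * W d x" for x using mono1[OF i] by simp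
    show "\<bar>kd i j\<bar> \<le> 3 * W d x" for x using W_ge1[of d x] kd_abs[of i j] by simp
    show "((\<lambda>y. (x(j:=y)) i) has_real_derivative kd i j) (at y)" for x y by (rule d_comp)
  qed (use i in auto)
  moreover have "(\<integral>x. g (ip d x \<theta>) * kd i j \<partial>gauss_vec d) = kd i j * (\<integral>x. g (ip d x \<theta>) \<partial>gauss_vec d)"
    by (simp add: mult.commute)
  ultimately show ?thesis by (simp add: algebra_simps)
qed
lemma lin_bound: fixes u a y :: real assumes "\<bar>u\<bar> \<le> a + \<bar>y\<bar>" "0 \<le> a" shows "\<bar>u\<bar> \<le> (1 + a) * (1 + y\<^sup>2)"
proof -
  have "0 \<le> a * y\<^sup>2" using assms(2) by simp
  moreover have "(1 + a) * (1 + y\<^sup>2) = 1 + a + y\<^sup>2 + a * y\<^sup>2" by (simp add: algebra_simps)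
  ultimately show ?thesis using assms absz_le[of y] by linarith
qed

lemma prod_bound: fixes u v a b y :: real
  assumes "\<bar>u\<bar> \<le> a + \<bar>y\<bar>" "\<bar>v\<bar> \<le> b + \<bar>y\<bar>" "0 \<le> a" "0 \<le> b"
  shows "\<bar>u * v\<bar> \<le> (1 + a) * (1 + b) * (1 + y\<^sup>2)"
proof -
  have "\<bar>u * v\<bar> \<le> (a + \<bar>y\<bar>) * (b + \<bar>y\<bar>)" unfolding abs_mult using assms by (intro mult_mono) auto
  also have "\<dots> = a * b + (a + b) * \<bar>y\<bar> + y\<^sup>2" by (simp add: algebra_simps power2_eq_square abs_mult[symmetric])
  also have "\<dots> \<le> a * b * (1 + y\<^sup>2) + (a + b) * (1 + y\<^sup>2) + (1 + y\<^sup>2)"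
  proof -
    have "a * b * 1 \<le> a * b * (1 + y\<^sup>2)" using assms by (intro mult_left_mono) auto
    moreover have "(a + b) * \<bar>y\<bar> \<le> (a + b) * (1 + y\<^sup>2)" using assms absz_le[of y] by (intro mult_left_mono) auto
    ultimately show ?thesis by simp
  qed
  also have "\<dots> = (1 + a) * (1 + b) * (1 + y\<^sup>2)" by (simp add: algebra_simps)
  finally show ?thesis .
qed

lemma I1:
  fixes g g' :: "real \<Rightarrow> real"
  assumes i: "i < d" and j: "j < d" and k: "k < d"
    and gd: "\<And>u. (g has_real_derivative g' u) (at u)" and cg': "continuous_on UNIV g'"
    and bg: "\<And>u. \<bar>g u\<bar> \<le> 1000" and bg': "\<And>u. \<bar>g' u\<bar> \<le> 1000"
  shows "(\<integral>x. g (ip d x \<theta>) * x i * x j * x k \<partial>gauss_vec d)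
     = \<theta> k * (\<integral>x. g' (ip d x \<theta>) * x i * x j \<partial>gauss_vec d)
       + kd i k * (\<integral>x. g (ip d x \<theta>) * x j \<partial>gauss_vec d) + kd j k * (\<integral>x. g (ip d x \<theta>) * x i \<partial>gauss_vec d)"
proof -
  have ia: "integrable (gauss_vec d) (\<lambda>x. g (ip d x \<theta>) * x j)"
  proof (rule intG[where K = "3000"])
    have cg: "continuous_on UNIV g" using gd by (meson DERIV_continuous continuous_at_imp_continuous_on)
    have mg[measurable]: "g \<in> borel_measurable borel" using cg by (rule borel_measurable_continuous_onI)
    show "(\<lambda>x. g (ip d x \<theta>) * x j) \<in> borel_measurable (gauss_vec d)" using j by measurable
    show "\<bar>g (ip d x \<theta>) * x j\<bar> \<le> 3000 * W d x" for x
      using mult_mono[OF bg mono1[OF j, of x]] by (simp add: abs_mult)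
  qed
  have ib: "integrable (gauss_vec d) (\<lambda>x. g (ip d x \<theta>) * x i)"
  proof (rule intG[where K = "3000"])
    have cg: "continuous_on UNIV g" using gd by (meson DERIV_continuous continuous_at_imp_continuous_on)
    have mg[measurable]: "g \<in> borel_measurable borel" using cg by (rule borel_measurable_continuous_onI)
    show "(\<lambda>x. g (ip d x \<theta>) * x i) \<in> borel_measurable (gauss_vec d)" using i by measurable
    show "\<bar>g (ip d x \<theta>) * x i\<bar> \<le> 3000 * W d x" for x
      using mult_mono[OF bg mono1[OF i, of x]] by (simp add: abs_mult)
  qed
  have "(\<integral>x. x k * (g (ip d x \<theta>) * (x i * x j)) \<partial>gauss_vec d)
       = \<theta> k * (\<integral>x. g' (ip d x \<theta>) * (x i * x j) \<partial>gauss_vec d)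
         + (\<integral>x. g (ip d x \<theta>) * (kd i k * x j + kd j k * x i) \<partial>gauss_vec d)"
  proof (rule steinG[OF k gd cg' bg bg', where C=6])
    show "\<exists>A. \<forall>y. \<bar>(x(k:=y)) i * (x(k:=y)) j\<bar> \<le> A * (1 + y\<^sup>2) \<and> \<bar>kd i k * (x(k:=y)) j + kd j k * (x(k:=y)) i\<bar> \<le> A * (1 + y\<^sup>2)" for x
    proof (intro exI[of _ "(1 + \<bar>x i\<bar>) * (1 + \<bar>x j\<bar>) + (1 + \<bar>x i\<bar>) + (1 + \<bar>x j\<bar>)"] allI conjI)
      fix y
      have b1: "\<bar>(x(k:=y)) i * (x(k:=y)) j\<bar> \<le> (1 + \<bar>x i\<bar>) * (1 + \<bar>x j\<bar>) * (1 + y\<^sup>2)"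
        by (rule prod_bound[OF comp_bound comp_bound]) auto
      have b2: "\<bar>(x(k:=y)) i\<bar> \<le> (1 + \<bar>x i\<bar>) * (1 + y\<^sup>2)" by (rule lin_bound[OF comp_bound]) auto
      have b3: "\<bar>(x(k:=y)) j\<bar> \<le> (1 + \<bar>x j\<bar>) * (1 + y\<^sup>2)" by (rule lin_bound[OF comp_bound]) auto
      have b4: "\<bar>kd i k * (x(k:=y)) j + kd j k * (x(k:=y)) i\<bar> \<le> \<bar>(x(k:=y)) j\<bar> + \<bar>(x(k:=y)) i\<bar>"
      proof -
        have "\<bar>kd i k * (x(k:=y)) j\<bar> \<le> 1 * \<bar>(x(k:=y)) j\<bar>" unfolding abs_mult by (intro mult_right_mono kd_abs) auto
        moreover have "\<bar>kd j k * (x(k:=y)) i\<bar> \<le> 1 * \<bar>(x(k:=y)) i\<bar>" unfolding abs_mult by (intro mult_right_mono kd_abs) auto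
        ultimately show ?thesis by (smt (verit, best) abs_triangle_ineq)
      qed
      have nn1: "0 \<le> (1 + \<bar>x i\<bar>) * (1 + y\<^sup>2)" "0 \<le> (1 + \<bar>x j\<bar>) * (1 + y\<^sup>2)"
        "0 \<le> (1 + \<bar>x i\<bar>) * (1 + \<bar>x j\<bar>) * (1 + y\<^sup>2)" by auto
      have eq: "((1 + \<bar>x i\<bar>) * (1 + \<bar>x j\<bar>) + (1 + \<bar>x i\<bar>) + (1 + \<bar>x j\<bar>)) * (1 + y\<^sup>2)
          = (1 + \<bar>x i\<bar>) * (1 + \<bar>x j\<bar>) * (1 + y\<^sup>2) + (1 + \<bar>x i\<bar>) * (1 + y\<^sup>2) + (1 + \<bar>x j\<bar>) * (1 + y\<^sup>2)"
        by (simp add: algebra_simps)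
      show "\<bar>(x(k:=y)) i * (x(k:=y)) j\<bar> \<le> ((1 + \<bar>x i\<bar>) * (1 + \<bar>x j\<bar>) + (1 + \<bar>x i\<bar>) + (1 + \<bar>x j\<bar>)) * (1 + y\<^sup>2)"
        unfolding eq using b1 nn1 by linarith
      show "\<bar>kd i k * (x(k:=y)) j + kd j k * (x(k:=y)) i\<bar> \<le> ((1 + \<bar>x i\<bar>) * (1 + \<bar>x j\<bar>) + (1 + \<bar>x i\<bar>) + (1 + \<bar>x j\<bar>)) * (1 + y\<^sup>2)"
        unfolding eq using b2 b3 b4 nn1 by linarith
    qed
    show "\<bar>x k * (x i * x j)\<bar> \<le> 6 * W d x" for x using mono3[OF i j k, of x] W_ge1[of d x] by (simp add: ac_simps)
    show "\<bar>x i * x j\<bar> \<le> 6 * W d x" for x using mono2[OF i j, of x] W_ge1[of d x] by simp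
    show "\<bar>kd i k * x j + kd j k * x i\<bar> \<le> 6 * W d x" for x
    proof -
      have "\<bar>kd i k * x j\<bar> \<le> 1 * \<bar>x j\<bar>" unfolding abs_mult by (intro mult_right_mono kd_abs) auto
      moreover have "\<bar>kd j k * x i\<bar> \<le> 1 * \<bar>x i\<bar>" unfolding abs_mult by (intro mult_right_mono kd_abs) auto
      moreover have "\<bar>kd i k * x j + kd j k * x i\<bar> \<le> \<bar>kd i k * x j\<bar> + \<bar>kd j k * x i\<bar>" by (rule abs_triangle_ineq)
      ultimately show ?thesis using mono1[OF i, of x] mono1[OF j, of x] by linarith
    qed
    show "((\<lambda>y. (x(k:=y)) i * (x(k:=y)) j) has_real_derivative kd i k * (x(k:=y)) j + kd j k * (x(k:=y)) i) (at y)" for x y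
      using DERIV_mult[OF d_comp[of x k i] d_comp[of x k j]] by (simp add: algebra_simps)
    show "continuous_on UNIV (\<lambda>y. kd i k * (x(k:=y)) j + kd j k * (x(k:=y)) i)" for x
      using c_comp[of x k i] c_comp[of x k j] by (intro continuous_intros) auto
  qed (use i j in auto)
  moreover have "(\<integral>x. g (ip d x \<theta>) * (kd i k * x j + kd j k * x i) \<partial>gauss_vec d)
      = kd i k * (\<integral>x. g (ip d x \<theta>) * x j \<partial>gauss_vec d) + kd j k * (\<integral>x. g (ip d x \<theta>) * x i \<partial>gauss_vec d)"
  proof -
    have "(\<integral>x. g (ip d x \<theta>) * (kd i k * x j + kd j k * x i) \<partial>gauss_vec d)
       = (\<integral>x. kd i k * (g (ip d x \<theta>) * x j) + kd j k * (g (ip d x \<theta>) * x i) \<partial>gauss_vec d)"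
      by (simp add: algebra_simps)
    also have "\<dots> = kd i k * (\<integral>x. g (ip d x \<theta>) * x j \<partial>gauss_vec d) + kd j k * (\<integral>x. g (ip d x \<theta>) * x i \<partial>gauss_vec d)"
      using ia ib by simp
    finally show ?thesis .
  qed
  ultimately show ?thesis by (simp add: ac_simps)
qed
lemma cont_deriv_facts:
  "\<And>u. \<bar>gam u\<bar> \<le> 1000" "\<And>u. \<bar>g1 u\<bar> \<le> 1000" "\<And>u. \<bar>g2 u\<bar> \<le> 1000" "\<And>u. \<bar>g3 u\<bar> \<le> 1000"
  using g_bound by auto

lemma law_g1: "(\<integral>x. g1 (ip d x \<theta>) \<partial>gauss_vec d) = (\<integral>z. g1 (vnorm d \<theta> * z) \<partial>std_normal_M)"
  by (rule law[where B=1000]) (auto intro: g_bound)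

lemma law_g3: "(\<integral>x. g3 (ip d x \<theta>) \<partial>gauss_vec d) = (\<integral>z. g3 (vnorm d \<theta> * z) \<partial>std_normal_M)"
  by (rule law[where B=1000]) (auto intro: g_bound)

lemma Tform:
  assumes i: "i < d" and j: "j < d" and k: "k < d" and t: "vnorm d \<theta> \<noteq> 0"
  shows "(\<integral>x. gam (ip d x \<theta>) * x i * x j * x k \<partial>gauss_vec d)
       = coef_a (vnorm d \<theta>) * \<theta> i * \<theta> j * \<theta> k
         + coef_b (vnorm d \<theta>) * (kd j k * \<theta> i + kd i k * \<theta> j + kd i j * \<theta> k)"
proof -
  let ?B = "(\<integral>x. g1 (ip d x \<theta>) \<partial>gauss_vec d)"
  let ?A = "(\<integral>x. g3 (ip d x \<theta>) \<partial>gauss_vec d)"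
  have A: "?A = coef_a (vnorm d \<theta>)" using law_g3 coef_a_eq[OF t] by simp
  have B: "?B = coef_b (vnorm d \<theta>)" using law_g1 coef_b_eq[OF t] by simp
  have s1: "(\<integral>x. gam (ip d x \<theta>) * x i * x j * x k \<partial>gauss_vec d)
     = \<theta> k * (\<integral>x. g1 (ip d x \<theta>) * x i * x j \<partial>gauss_vec d)
       + kd i k * (\<integral>x. gam (ip d x \<theta>) * x j \<partial>gauss_vec d) + kd j k * (\<integral>x. gam (ip d x \<theta>) * x i \<partial>gauss_vec d)"
    by (rule I1[OF i j k gam_deriv cont_g(2) g_bound(1) g_bound(2)])
  have s2: "(\<integral>x. g1 (ip d x \<theta>) * x i * x j \<partial>gauss_vec d)
     = \<theta> j * (\<integral>x. g2 (ip d x \<theta>) * x i \<partial>gauss_vec d) + kd i j * ?B"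
    by (rule I2[OF i j g1_deriv cont_g(3) g_bound(2) g_bound(3)])
  have s3: "(\<integral>x. g2 (ip d x \<theta>) * x i \<partial>gauss_vec d) = \<theta> i * ?A"
    by (rule I3[OF i g2_deriv cont_g(4) g_bound(3) g_bound(4)])
  have s4: "(\<integral>x. gam (ip d x \<theta>) * x j \<partial>gauss_vec d) = \<theta> j * ?B"
    by (rule I3[OF j gam_deriv cont_g(2) g_bound(1) g_bound(2)])
  have s5: "(\<integral>x. gam (ip d x \<theta>) * x i \<partial>gauss_vec d) = \<theta> i * ?B"
    by (rule I3[OF i gam_deriv cont_g(2) g_bound(1) g_bound(2)])
  show ?thesis unfolding s1 s2 s3 s4 s5 A B by (simp add: algebra_simps)
qed
lemma kd_sum1: "j < d \<Longrightarrow> (\<Sum>k<d. f k * kd j k) = (f j :: real)"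
  by (simp add: kd_def if_distrib cong: if_cong)

lemma kd_sum2: "j < d \<Longrightarrow> (\<Sum>k<d. f k * kd k j) = (f j :: real)"
  by (simp add: kd_def if_distrib cong: if_cong)

lemma sum_alg:
  fixes v \<theta> :: "nat \<Rightarrow> real"
  shows "(\<Sum>i<d. \<Sum>j<d. \<Sum>k<d. v i * v j * \<theta> k * (a * \<theta> i * \<theta> j * \<theta> k + b * (kd j k * \<theta> i + kd i k * \<theta> j + kd i j * \<theta> k)))
     = (a * ip d \<theta> \<theta> + 2 * b) * (ip d v \<theta>)\<^sup>2 + b * ip d \<theta> \<theta> * ip d v v"
proof -
  have inner: "(\<Sum>k<d. v i * v j * \<theta> k * (a * \<theta> i * \<theta> j * \<theta> k + b * (kd j k * \<theta> i + kd i k * \<theta> j + kd i j * \<theta> k)))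
     = v i * v j * (a * \<theta> i * \<theta> j * ip d \<theta> \<theta> + 2 * b * \<theta> i * \<theta> j + b * kd i j * ip d \<theta> \<theta>)"
    if "i < d" "j < d" for i j
  proof -
    have "(\<Sum>k<d. v i * v j * \<theta> k * (a * \<theta> i * \<theta> j * \<theta> k + b * (kd j k * \<theta> i + kd i k * \<theta> j + kd i j * \<theta> k)))
      = (\<Sum>k<d. (v i * v j * a * \<theta> i * \<theta> j) * (\<theta> k * \<theta> k) + (v i * v j * b * \<theta> i) * (\<theta> k * kd j k)
          + (v i * v j * b * \<theta> j) * (\<theta> k * kd i k) + (v i * v j * b * kd i j) * (\<theta> k * \<theta> k))"
      by (rule sum.cong) (auto simp: algebra_simps)
    also have "\<dots> = (v i * v j * a * \<theta> i * \<theta> j) * ip d \<theta> \<theta> + (v i * v j * b * \<theta> i) * \<theta> j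
          + (v i * v j * b * \<theta> j) * \<theta> i + (v i * v j * b * kd i j) * ip d \<theta> \<theta>"
      using that by (simp add: sum.distrib sum_distrib_left[symmetric] kd_sum1 ip_def)
    finally show ?thesis by (simp add: algebra_simps)
  qed
  have "(\<Sum>i<d. \<Sum>j<d. \<Sum>k<d. v i * v j * \<theta> k * (a * \<theta> i * \<theta> j * \<theta> k + b * (kd j k * \<theta> i + kd i k * \<theta> j + kd i j * \<theta> k)))
     = (\<Sum>i<d. \<Sum>j<d. v i * v j * (a * \<theta> i * \<theta> j * ip d \<theta> \<theta> + 2 * b * \<theta> i * \<theta> j + b * kd i j * ip d \<theta> \<theta>))"
    by (intro sum.cong refl) (simp add: inner)
  also have "\<dots> = (\<Sum>i<d. \<Sum>j<d. (v i * (a * \<theta> i * ip d \<theta> \<theta> + 2 * b * \<theta> i)) * (v j * \<theta> j) + (v i * b * ip d \<theta> \<theta>) * (v j * kd i j))"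
    by (intro sum.cong refl) (simp add: algebra_simps)
  also have "\<dots> = (\<Sum>i<d. (v i * (a * \<theta> i * ip d \<theta> \<theta> + 2 * b * \<theta> i)) * ip d v \<theta> + (v i * b * ip d \<theta> \<theta>) * v i)"
  proof (rule sum.cong[OF refl])
    fix i assume "i \<in> {..<d}"
    then show "(\<Sum>j<d. (v i * (a * \<theta> i * ip d \<theta> \<theta> + 2 * b * \<theta> i)) * (v j * \<theta> j) + (v i * b * ip d \<theta> \<theta>) * (v j * kd i j))
       = (v i * (a * \<theta> i * ip d \<theta> \<theta> + 2 * b * \<theta> i)) * ip d v \<theta> + (v i * b * ip d \<theta> \<theta>) * v i"
      by (simp add: sum.distrib sum_distrib_left[symmetric] kd_sum1 kd_sum2 ip_def)
  qed
  also have "\<dots> = (\<Sum>i<d. ((a * ip d \<theta> \<theta> + 2 * b) * ip d v \<theta>) * (v i * \<theta> i) + (b * ip d \<theta> \<theta>) * (v i * v i))"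
    by (rule sum.cong) (simp_all add: algebra_simps)
  also have "\<dots> = ((a * ip d \<theta> \<theta> + 2 * b) * ip d v \<theta>) * (\<Sum>i<d. v i * \<theta> i) + (b * ip d \<theta> \<theta>) * (\<Sum>i<d. v i * v i)"
    by (simp only: sum.distrib sum_distrib_left[symmetric])
  also have "\<dots> = (a * ip d \<theta> \<theta> + 2 * b) * ip d v \<theta> * ip d v \<theta> + b * ip d \<theta> \<theta> * ip d v v"
    by (simp only: ip_def[symmetric])
  finally show ?thesis by (simp add: power2_eq_square)
qed
lemma intF: "i < d \<Longrightarrow> j < d \<Longrightarrow> k < d \<Longrightarrow> integrable (gauss_vec d) (\<lambda>x. c * (gam (ip d x \<theta>) * x i * x j * x k))"
proof -
  assume a: "i < d" "j < d" "k < d"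
  have "integrable (gauss_vec d) (\<lambda>x. gam (ip d x \<theta>) * x i * x j * x k)"
  proof (rule intG[where K=3000])
    show "(\<lambda>x. gam (ip d x \<theta>) * x i * x j * x k) \<in> borel_measurable (gauss_vec d)" using a by measurable
    show "\<bar>gam (ip d x \<theta>) * x i * x j * x k\<bar> \<le> 3000 * W d x" for x
      using mult_mono[OF g_bound(1) mono3[OF a, of x]] by (simp add: abs_mult mult.assoc)
  qed
  then show ?thesis by simp
qed

lemma integral_sum3:
  fixes f :: "nat \<Rightarrow> nat \<Rightarrow> nat \<Rightarrow> 'a \<Rightarrow> real"
  assumes "\<And>i j k. i < d \<Longrightarrow> j < d \<Longrightarrow> k < d \<Longrightarrow> integrable M (f i j k)"
  shows "(\<integral>x. (\<Sum>i<d. \<Sum>j<d. \<Sum>k<d. f i j k x) \<partial>M) = (\<Sum>i<d. \<Sum>j<d. \<Sum>k<d. (\<integral>x. f i j k x \<partial>M))"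
proof -
  have "(\<integral>x. (\<Sum>i<d. \<Sum>j<d. \<Sum>k<d. f i j k x) \<partial>M) = (\<Sum>i<d. (\<integral>x. (\<Sum>j<d. \<Sum>k<d. f i j k x) \<partial>M))"
    by (rule Bochner_Integration.integral_sum) (auto intro!: Bochner_Integration.integrable_sum assms)
  also have "\<dots> = (\<Sum>i<d. \<Sum>j<d. (\<integral>x. (\<Sum>k<d. f i j k x) \<partial>M))"
    by (intro sum.cong refl Bochner_Integration.integral_sum) (auto intro!: Bochner_Integration.integrable_sum assms)
  also have "\<dots> = (\<Sum>i<d. \<Sum>j<d. \<Sum>k<d. (\<integral>x. f i j k x \<partial>M))"
    by (intro sum.cong refl Bochner_Integration.integral_sum) (auto intro!: assms)
  finally show ?thesis .
qed

lemma Iform: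
  assumes t: "vnorm d \<theta> \<noteq> 0"
  shows "(\<integral>x. gam (ip d x \<theta>) * (ip d x v)\<^sup>2 * ip d x \<theta> \<partial>gauss_vec d)
     = (coef_a (vnorm d \<theta>) * ip d \<theta> \<theta> + 2 * coef_b (vnorm d \<theta>)) * (ip d v \<theta>)\<^sup>2 + coef_b (vnorm d \<theta>) * ip d \<theta> \<theta> * ip d v v"
proof -
  let ?a = "coef_a (vnorm d \<theta>)" and ?b = "coef_b (vnorm d \<theta>)"
  have pt: "gam (ip d x \<theta>) * (ip d x v)\<^sup>2 * ip d x \<theta>
     = (\<Sum>i<d. \<Sum>j<d. \<Sum>k<d. v i * v j * \<theta> k * (gam (ip d x \<theta>) * x i * x j * x k))" for x
  proof -
    have "gam (ip d x \<theta>) * (ip d x v)\<^sup>2 * ip d x \<theta>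
       = gam (ip d x \<theta>) * ((\<Sum>k<d. x k * \<theta> k) * (\<Sum>j<d. x j * v j) * (\<Sum>i<d. x i * v i))"
      by (simp add: ip_def power2_eq_square ac_simps)
    also have "\<dots> = (\<Sum>i<d. \<Sum>j<d. \<Sum>k<d. gam (ip d x \<theta>) * ((x k * \<theta> k) * (x j * v j) * (x i * v i)))"
      by (simp add: sum_distrib_left sum_distrib_right)
    also have "\<dots> = (\<Sum>i<d. \<Sum>j<d. \<Sum>k<d. v i * v j * \<theta> k * (gam (ip d x \<theta>) * x i * x j * x k))"
      by (intro sum.cong refl) (simp add: algebra_simps)
    finally show ?thesis .
  qed
  have "(\<integral>x. gam (ip d x \<theta>) * (ip d x v)\<^sup>2 * ip d x \<theta> \<partial>gauss_vec d)
     = (\<integral>x. (\<Sum>i<d. \<Sum>j<d. \<Sum>k<d. v i * v j * \<theta> k * (gam (ip d x \<theta>) * x i * x j * x k)) \<partial>gauss_vec d)"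
    by (simp only: pt)
  also have "\<dots> = (\<Sum>i<d. \<Sum>j<d. \<Sum>k<d. (\<integral>x. v i * v j * \<theta> k * (gam (ip d x \<theta>) * x i * x j * x k) \<partial>gauss_vec d))"
    by (rule integral_sum3) (rule intF; assumption)
  also have "\<dots> = (\<Sum>i<d. \<Sum>j<d. \<Sum>k<d. v i * v j * \<theta> k * (\<integral>x. gam (ip d x \<theta>) * x i * x j * x k \<partial>gauss_vec d))"
    by simp
  also have "\<dots> = (\<Sum>i<d. \<Sum>j<d. \<Sum>k<d. v i * v j * \<theta> k * (?a * \<theta> i * \<theta> j * \<theta> k + ?b * (kd j k * \<theta> i + kd i k * \<theta> j + kd i j * \<theta> k)))"
    by (intro sum.cong refl) (simp add: Tform[OF _ _ _ t])
  also have "\<dots> = (?a * ip d \<theta> \<theta> + 2 * ?b) * (ip d v \<theta>)\<^sup>2 + ?b * ip d \<theta> \<theta> * ip d v v"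
    by (rule sum_alg)
  finally show ?thesis .
qed
lemma gam_sign: "0 \<le> y \<Longrightarrow> gam y \<le> 0" "y \<le> 0 \<Longrightarrow> 0 \<le> gam y"
proof -
  have den: "0 < (1 + exp y)^3" by (simp add: add_pos_pos)
  show "0 \<le> y \<Longrightarrow> gam y \<le> 0"
  proof -
    assume "0 \<le> y"
    then have "1 - exp y \<le> 0" by simp
    then have "exp y * (1 - exp y) \<le> 0" by (simp add: mult_nonneg_nonpos)
    then show ?thesis unfolding gam_def using den by (simp add: divide_nonpos_pos)
  qed
  show "y \<le> 0 \<Longrightarrow> 0 \<le> gam y"
  proof -
    assume "y \<le> 0"
    then have "0 \<le> 1 - exp y" by simp
    then have "0 \<le> exp y * (1 - exp y)" by simp
    then show ?thesis unfolding gam_def using den by simp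
  qed
qed

lemma zgam_nonpos: assumes "0 < t" shows "z * gam (t * z) \<le> 0" "z^3 * gam (t * z) \<le> 0"
proof -
  have "z * gam (t * z) \<le> 0 \<and> z^3 * gam (t * z) \<le> 0"
  proof (cases "0 \<le> z")
    case True
    then have "gam (t * z) \<le> 0" using assms by (intro gam_sign(1)) simp
    then show ?thesis using True by (simp add: mult_nonneg_nonpos)
  next
    case False
    then have "0 \<le> gam (t * z)" using assms by (intro gam_sign(2)) (simp add: mult_nonneg_nonpos)
    moreover have "z^3 \<le> 0" using False by (simp add: power_le_zero_eq)
    ultimately show ?thesis using False by (simp add: mult_nonpos_nonneg)
  qed
  then show "z * gam (t * z) \<le> 0" "z^3 * gam (t * z) \<le> 0" by auto
qed

definition m0 :: "real \<Rightarrow> real \<Rightarrow> real" where "m0 c C = c / (1 + exp (2 * C))^3"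

lemma m0_pos: "0 < c \<Longrightarrow> 0 < m0 c C"
  unfolding m0_def by (simp add: add_pos_pos)

lemma gam_neg_bound:
  assumes "0 < c" "c \<le> y" "y \<le> 2 * C"
  shows "gam y \<le> - m0 c C"
proof -
  have num: "c \<le> exp y * (exp y - 1)"
  proof -
    have "c \<le> exp y - 1" using assms exp_ge_add_one_self[of y] by linarith
    also have "\<dots> \<le> exp y * (exp y - 1)"
    proof -
      have "1 * (exp y - 1) \<le> exp y * (exp y - 1)"
        using assms by (intro mult_right_mono) auto
      then show ?thesis by simp
    qed
    finally show ?thesis .
  qed
  have den: "0 < (1 + exp y)^3" by (simp add: add_pos_pos)
  have den2: "(1 + exp y)^3 \<le> (1 + exp (2 * C))^3"
    using assms by (intro power_mono) auto
  have "c / (1 + exp (2 * C))^3 \<le> exp y * (exp y - 1) / (1 + exp y)^3"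
    by (rule frac_le) (use assms num den den2 in auto)
  moreover have "gam y = - (exp y * (exp y - 1) / (1 + exp y)^3)"
  proof -
    have h: "exp y * (1 - exp y) = - (exp y * (exp y - 1))" by (simp add: algebra_simps)
    show ?thesis unfolding gam_def by (simp only: h minus_divide_left)
  qed
  ultimately show ?thesis unfolding m0_def by simp
qed

lemma zgam_neg:
  assumes "0 < c" "c \<le> t" "t \<le> C" "1 \<le> z" "z \<le> 2"
  shows "z * gam (t * z) \<le> - m0 c C" "z^3 * gam (t * z) \<le> - m0 c C"
proof -
  have y1: "c * 1 \<le> t * z" using assms by (intro mult_mono) auto
  have y2: "t * z \<le> C * 2" using assms by (intro mult_mono) auto
  note y1 = y1[simplified] and y2 = y2[simplified mult.commute[of C 2]]
  have g: "gam (t * z) \<le> - m0 c C" by (rule gam_neg_bound[OF assms(1) y1 y2])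
  have g0: "gam (t * z) \<le> 0" using g m0_pos[OF assms(1), of C] by linarith
  have "z * gam (t * z) \<le> 1 * gam (t * z)" by (rule mult_right_mono_neg) (use assms g0 in auto)
  then show "z * gam (t * z) \<le> - m0 c C" using g by simp
  have "1 \<le> z^3" using assms by (simp add: one_le_power)
  then have "z^3 * gam (t * z) \<le> 1 * gam (t * z)" by (rule mult_right_mono_neg) (use g0 in auto)
  then show "z^3 * gam (t * z) \<le> - m0 c C" using g by simp
qed
lemma phi_ge: "1 \<le> z \<Longrightarrow> z \<le> 2 \<Longrightarrow> std_normal_density 2 \<le> std_normal_density z"
proof -
  assume a: "1 \<le> z" "z \<le> 2"
  have "z\<^sup>2 \<le> 2\<^sup>2" using a by (intro power_mono) auto
  then have "exp (- 2\<^sup>2 / 2) \<le> exp (- z\<^sup>2 / 2)" by simp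
  then show ?thesis unfolding std_normal_density_def by (intro mult_left_mono) auto
qed

lemma phi2_pos: "0 < std_normal_density 2"
  by (simp add: std_normal_density_def)

lemma int_upper:
  fixes f :: "real \<Rightarrow> real"
  assumes mf[measurable]: "f \<in> borel_measurable borel" and b: "\<And>z. \<bar>f z\<bar> \<le> K * (1 + \<bar>z\<bar>^3)"
    and np: "\<And>z. f z \<le> 0" and neg: "\<And>z. 1 \<le> z \<Longrightarrow> z \<le> 2 \<Longrightarrow> f z \<le> - m" and m: "0 \<le> m"
  shows "(\<integral>z. f z \<partial>std_normal_M) \<le> - (m * std_normal_density 2)"
proof -
  have i1: "integrable lborel (\<lambda>z. std_normal_density z * f z)"
    using intN[OF mf b] integrable_N[OF mf] by simp
  have i2: "integrable lborel (\<lambda>z. - (m * std_normal_density 2) * indicator {1..2::real} z)"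
    by (intro Bochner_Integration.integrable_mult_right integrable_real_indicator) auto
  have "(\<integral>z. f z \<partial>std_normal_M) = (\<integral>z. std_normal_density z * f z \<partial>lborel)" by (rule integral_N[OF mf])
  also have "\<dots> \<le> (\<integral>z. - (m * std_normal_density 2) * indicator {1..2::real} z \<partial>lborel)"
  proof (rule integral_mono[OF i1 i2])
    fix z :: real
    show "std_normal_density z * f z \<le> - (m * std_normal_density 2) * indicator {1..2} z"
    proof (cases "z \<in> {1..2}")
      case True
      then have "std_normal_density z * f z \<le> std_normal_density z * (- m)"
        using neg by (intro mult_left_mono) auto
      also have "\<dots> \<le> std_normal_density 2 * (- m)"
        using True phi_ge m by (intro mult_right_mono_neg) auto
      finally show ?thesis using True by (simp add: mult.commute)
    next
      case False
      have "std_normal_density z * f z \<le> 0" using np[of z] by (simp add: mult_nonneg_nonpos)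
      then show ?thesis using False by simp
    qed
  qed
  also have "\<dots> = - (m * std_normal_density 2)"
    by (simp add: integral_indicator)
  finally show ?thesis .
qed

lemma int_lower:
  fixes f :: "real \<Rightarrow> real"
  assumes mf[measurable]: "f \<in> borel_measurable borel" and b: "\<And>z. \<bar>f z\<bar> \<le> 1000 * (1 + \<bar>z\<bar>^3)"
  shows "- 3000 \<le> (\<integral>z. f z \<partial>std_normal_M)"
proof -
  interpret N: prob_space std_normal_M by (rule prob_N)
  have i3: "integrable std_normal_M (\<lambda>z. \<bar>z\<bar>^3)"
    by (rule intN[where K=1]) auto
  have e3: "(\<integral>z. \<bar>z\<bar>^3 \<partial>std_normal_M) = sqrt (2 / pi) * 2"
    using integral_std_normal_moment_abs_odd[of 1] by (simp add: integral_N)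
  have s: "sqrt (2 / pi) \<le> 1" using pi_gt3 by simp
  have "\<bar>\<integral>z. f z \<partial>std_normal_M\<bar> \<le> (\<integral>z. \<bar>f z\<bar> \<partial>std_normal_M)" by (rule integral_abs_bound)
  also have "\<dots> \<le> (\<integral>z. 1000 + 1000 * \<bar>z\<bar>^3 \<partial>std_normal_M)"
    using intN[OF mf b] i3 b by (intro integral_mono) (auto simp: algebra_simps)
  also have "\<dots> = 1000 + 1000 * sqrt (2 / pi) * 2"
    using i3 e3 N.prob_space by simp
  also have "\<dots> \<le> 3000" using s by simp
  finally show ?thesis by simp
qed

lemma E_bounds:
  assumes c: "0 < c" and t: "c \<le> t" "t \<le> C"
  shows "(\<integral>z. z * gam (t * z) \<partial>std_normal_M) \<le> - (m0 c C * std_normal_density 2)"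
        "(\<integral>z. z^3 * gam (t * z) \<partial>std_normal_M) \<le> - (m0 c C * std_normal_density 2)"
        "- 3000 \<le> (\<integral>z. z * gam (t * z) \<partial>std_normal_M)"
        "- 3000 \<le> (\<integral>z. z^3 * gam (t * z) \<partial>std_normal_M)"
proof -
  have t0: "0 < t" using c t by simp
  have b1: "\<bar>z * gam (t * z)\<bar> \<le> 1000 * (1 + \<bar>z\<bar>^3)" for z
    using bterm3[OF g_bound(1), of 1 1 z "t*z"] by simp
  have b3: "\<bar>z^3 * gam (t * z)\<bar> \<le> 1000 * (1 + \<bar>z\<bar>^3)" for z
    using bterm3[OF g_bound(1), of 3 1 z "t*z"] by simp
  show "(\<integral>z. z * gam (t * z) \<partial>std_normal_M) \<le> - (m0 c C * std_normal_density 2)"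
    by (rule int_upper[OF _ b1 zgam_nonpos(1)[OF t0] zgam_neg(1)[OF c t]]) (use m0_pos[OF c, of C] in auto)
  show "(\<integral>z. z^3 * gam (t * z) \<partial>std_normal_M) \<le> - (m0 c C * std_normal_density 2)"
    by (rule int_upper[OF _ b3 zgam_nonpos(2)[OF t0] zgam_neg(2)[OF c t]]) (use m0_pos[OF c, of C] in auto)
  show "- 3000 \<le> (\<integral>z. z * gam (t * z) \<partial>std_normal_M)" by (rule int_lower[OF _ b1]) auto
  show "- 3000 \<le> (\<integral>z. z^3 * gam (t * z) \<partial>std_normal_M)" by (rule int_lower[OF _ b3]) auto
qed
lemma part2_bound:
  fixes c C t E1 E3 P N m :: real
  assumes c: "0 < c" "c < t" "t < C" and m: "0 \<le> m"
    and e1: "-3000 \<le> E1" "E1 \<le> -m" and e3: "-3000 \<le> E3" "E3 \<le> -m"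
    and P: "P \<le> t\<^sup>2 * N" "0 \<le> P"
  shows "- (C * 3000) * N \<le> ((E3 - 3 * E1) / t^3 * t\<^sup>2 + 2 * (E1 / t)) * P + E1 / t * t\<^sup>2 * N"
    and "((E3 - 3 * E1) / t^3 * t\<^sup>2 + 2 * (E1 / t)) * P + E1 / t * t\<^sup>2 * N \<le> - (c * m) * N"
proof -
  have t0: "0 < t" using c by simp
  define q where "q = P / t\<^sup>2"
  have q0: "0 \<le> q" using P t0 by (simp add: q_def)
  have qN: "q \<le> N" using P t0 by (simp add: q_def divide_simps mult.commute)
  have N0: "0 \<le> N" using q0 qN by simp
  have eq: "((E3 - 3 * E1) / t^3 * t\<^sup>2 + 2 * (E1 / t)) * P + E1 / t * t\<^sup>2 * N = t * (E3 * q + E1 * (N - q))"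
    using t0 by (simp add: q_def field_simps power2_eq_square power3_eq_cube)
  have u1: "E3 * q \<le> - m * q" using e3 q0 by (intro mult_right_mono) auto
  have u2: "E1 * (N - q) \<le> - m * (N - q)" using e1 qN by (intro mult_right_mono) auto
  have l1: "- 3000 * q \<le> E3 * q" using e3 q0 by (intro mult_right_mono) auto
  have l2: "- 3000 * (N - q) \<le> E1 * (N - q)" using e1 qN by (intro mult_right_mono) auto
  have "t * (E3 * q + E1 * (N - q)) \<le> t * (- m * N)"
    using u1 u2 t0 by (intro mult_left_mono) (auto simp: algebra_simps)
  also have "\<dots> \<le> c * (- m * N)"
  proof -
    have "0 \<le> m * N" using m N0 by simp
    then have "c * (m * N) \<le> t * (m * N)" using c by (intro mult_right_mono) auto
    then show ?thesis by simp
  qed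
  finally show "((E3 - 3 * E1) / t^3 * t\<^sup>2 + 2 * (E1 / t)) * P + E1 / t * t\<^sup>2 * N \<le> - (c * m) * N"
    unfolding eq by simp
  have "C * (- 3000 * N) \<le> t * (- 3000 * N)"
    using c N0 by (intro mult_right_mono_neg) auto
  also have "\<dots> \<le> t * (E3 * q + E1 * (N - q))"
    using l1 l2 t0 by (intro mult_left_mono) (auto simp: algebra_simps)
  finally show "- (C * 3000) * N \<le> ((E3 - 3 * E1) / t^3 * t\<^sup>2 + 2 * (E1 / t)) * P + E1 / t * t\<^sup>2 * N"
    unfolding eq by simp
qed

theorem mainTheorem11:
  fixes c C :: real
  assumes "0 < c" and "c < C"
  shows "(\<forall>d::nat. \<forall>\<theta>::nat \<Rightarrow> real. c < vnorm d \<theta> \<longrightarrow> vnorm d \<theta> < C \<longrightarrow>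
            (\<forall>i<d. \<forall>j<d. \<forall>k<d.
               (\<integral>x. gam (ip d x \<theta>) * x i * x j * x k \<partial>gauss_vec d)
               = coef_a (vnorm d \<theta>) * \<theta> i * \<theta> j * \<theta> k
                 + coef_b (vnorm d \<theta>) * (kd j k * \<theta> i + kd i k * \<theta> j + kd i j * \<theta> k)))
       \<and> (\<exists>c1 c2. 0 < c1 \<and> 0 < c2 \<and>
            (\<forall>d::nat. \<forall>\<theta>::nat \<Rightarrow> real. c < vnorm d \<theta> \<longrightarrow> vnorm d \<theta> < C \<longrightarrow>
               (\<forall>v::nat \<Rightarrow> real.
                  - c2 * (vnorm d v)\<^sup>2
                    \<le> (\<integral>x. gam (ip d x \<theta>) * (ip d x v)\<^sup>2 * ip d x \<theta> \<partial>gauss_vec d)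
                  \<and> (\<integral>x. gam (ip d x \<theta>) * (ip d x v)\<^sup>2 * ip d x \<theta> \<partial>gauss_vec d)
                    \<le> - c1 * (vnorm d v)\<^sup>2)))"
proof (intro conjI)
  show "\<forall>d::nat. \<forall>\<theta>::nat \<Rightarrow> real. c < vnorm d \<theta> \<longrightarrow> vnorm d \<theta> < C \<longrightarrow>
            (\<forall>i<d. \<forall>j<d. \<forall>k<d.
               (\<integral>x. gam (ip d x \<theta>) * x i * x j * x k \<partial>gauss_vec d)
               = coef_a (vnorm d \<theta>) * \<theta> i * \<theta> j * \<theta> k
                 + coef_b (vnorm d \<theta>) * (kd j k * \<theta> i + kd i k * \<theta> j + kd i j * \<theta> k))"
  proof (intro allI impI)
    fix d \<theta> i j k
    assume "c < vnorm d \<theta>" "i < d" "j < d" "k < d"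
    moreover have "vnorm d \<theta> \<noteq> 0" using \<open>c < vnorm d \<theta>\<close> assms(1) by simp
    ultimately show "(\<integral>x. gam (ip d x \<theta>) * x i * x j * x k \<partial>gauss_vec d)
               = coef_a (vnorm d \<theta>) * \<theta> i * \<theta> j * \<theta> k
                 + coef_b (vnorm d \<theta>) * (kd j k * \<theta> i + kd i k * \<theta> j + kd i j * \<theta> k)"
      using Tform by blast
  qed
  let ?m = "m0 c C * std_normal_density 2"
  have m: "0 < ?m" using m0_pos[OF assms(1), of C] phi2_pos by simp
  show "\<exists>c1 c2. 0 < c1 \<and> 0 < c2 \<and>
            (\<forall>d::nat. \<forall>\<theta>::nat \<Rightarrow> real. c < vnorm d \<theta> \<longrightarrow> vnorm d \<theta> < C \<longrightarrow>
               (\<forall>v::nat \<Rightarrow> real.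
                  - c2 * (vnorm d v)\<^sup>2
                    \<le> (\<integral>x. gam (ip d x \<theta>) * (ip d x v)\<^sup>2 * ip d x \<theta> \<partial>gauss_vec d)
                  \<and> (\<integral>x. gam (ip d x \<theta>) * (ip d x v)\<^sup>2 * ip d x \<theta> \<partial>gauss_vec d)
                    \<le> - c1 * (vnorm d v)\<^sup>2))"
  proof (intro exI conjI allI impI)
    show "0 < c * ?m" using assms(1) m by simp
    show "0 < C * 3000" using assms by simp
    fix d \<theta> v
    assume tc: "c < vnorm d \<theta>" and tC: "vnorm d \<theta> < C"
    let ?t = "vnorm d \<theta>"
    have t0: "?t \<noteq> 0" using tc assms(1) by simp
    have T2: "ip d \<theta> \<theta> = ?t\<^sup>2" unfolding vnorm_def using ip_nonneg[of d \<theta>] by simp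
    have N2: "ip d v v = (vnorm d v)\<^sup>2" unfolding vnorm_def using ip_nonneg[of d v] by simp
    have CS: "(ip d v \<theta>)\<^sup>2 \<le> ?t\<^sup>2 * ip d v v"
      using Cauchy_Schwarz_ineq_sum[of v \<theta> "{..<d}"] unfolding T2[symmetric]
      by (simp add: ip_def power2_eq_square mult.commute)
    have EB: "(\<integral>z. z * gam (?t * z) \<partial>std_normal_M) \<le> - ?m"
             "(\<integral>z. z^3 * gam (?t * z) \<partial>std_normal_M) \<le> - ?m"
             "- 3000 \<le> (\<integral>z. z * gam (?t * z) \<partial>std_normal_M)"
             "- 3000 \<le> (\<integral>z. z^3 * gam (?t * z) \<partial>std_normal_M)"
      using E_bounds[OF assms(1), of ?t C] tc tC by auto
    have I: "(\<integral>x. gam (ip d x \<theta>) * (ip d x v)\<^sup>2 * ip d x \<theta> \<partial>gauss_vec d)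
       = (((\<integral>z. z^3 * gam (?t * z) \<partial>std_normal_M) - 3 * (\<integral>z. z * gam (?t * z) \<partial>std_normal_M)) / ?t^3 * ?t\<^sup>2
          + 2 * ((\<integral>z. z * gam (?t * z) \<partial>std_normal_M) / ?t)) * (ip d v \<theta>)\<^sup>2
         + (\<integral>z. z * gam (?t * z) \<partial>std_normal_M) / ?t * ?t\<^sup>2 * ip d v v"
      unfolding Iform[OF t0] T2 coef_a_def coef_b_def by simp
    have B: "- (C * 3000) * ip d v v \<le> (\<integral>x. gam (ip d x \<theta>) * (ip d x v)\<^sup>2 * ip d x \<theta> \<partial>gauss_vec d)"
            "(\<integral>x. gam (ip d x \<theta>) * (ip d x v)\<^sup>2 * ip d x \<theta> \<partial>gauss_vec d) \<le> - (c * ?m) * ip d v v"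
      unfolding I using part2_bound[OF assms(1) tc tC _ EB(3) EB(1) EB(4) EB(2) CS] m by auto
    show "- (C * 3000) * (vnorm d v)\<^sup>2 \<le> (\<integral>x. gam (ip d x \<theta>) * (ip d x v)\<^sup>2 * ip d x \<theta> \<partial>gauss_vec d)"
      using B(1) N2 by simp
    show "(\<integral>x. gam (ip d x \<theta>) * (ip d x v)\<^sup>2 * ip d x \<theta> \<partial>gauss_vec d) \<le> - (c * ?m) * (vnorm d v)\<^sup>2"
      using B(2) N2 by simp
  qed
qed

end
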